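(* Let $f:[a,b]\to\mathbb R$ be bounded, with a finite number of local maximum points, local minimum points, and discontinuity points, and with $\mathcal{ER}(f)=[\inf_{[a,b]}f,\sup_{[a,b]}f]$. Let $\{\Lambda_n=\{\lambda_{1,n},\ldots,\lambda_{d_n,n}\}\}_n$ be a sequence of finite multisets of real numbers with $d_n\to\infty$, such that $\{\Lambda_n\}_n$ has an asymptotic distribution described by $f$ and $\Lambda_n\subseteq f([a,b])$ for every $n$. Then there exist an asymptotically uniform grid $\{x_{i,n}\}_{i=1,\ldots,d_n}$ in $[a,b]$ with $\{x_{i,n}\}_{i=1,\ldots,d_n}\subset[a,b]$ and, for every $n$, a permutation $\tau_n$ of $\{1,\ldots,d_n\}$ such that $\lambda_{\tau_n(i),n}=f(x_{i,n})$ for all $i=1,\ldots,d_n$.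
   Context: A point $x_0\in[a,b]$ is a local maximum (resp. minimum) point of $f$ if $f(x_0)\ge f(x)$ (resp. $f(x_0)\le f(x)$) for all $x$ in a neighborhood of $x_0$ in $[a,b]$ (non-strict inequalities; e.g. every point is such a point if $f$ is constant). For measurable $f:[a,b]\to\mathbb R$, $\mathcal{ER}(f)=\{z\in\mathbb R:\mu_1\{x:|f(x)-z|<\epsilon\}>0\ \forall\epsilon>0\}$. A sequence of points $\{x_{i,n}\}_{i=1,\ldots,d_n}$ with $d_n\to\infty$ is an asymptotically uniform grid in $[a,b]$ if $\max_{i}|x_{i,n}-(a+i(b-a)/d_n)|\to0$. $\{\Lambda_n\}_n$ has an asymptotic distribution described by $f$ if $\lim_{n}\frac1{d_n}\sum_{i=1}^{d_n}F(\lambda_{i,n})=\frac1{b-a}\int_a^bF(f(x))\,dx$ for every continuous $F:\mathbb C\to\mathbb C$ with bounded support. *)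

theory Defs
  imports "HOL-Analysis.Analysis"
begin

definition local_max_point :: "real \<Rightarrow> real \<Rightarrow> (real \<Rightarrow> real) \<Rightarrow> real \<Rightarrow> bool" where
  "local_max_point a b f x0 \<longleftrightarrow> x0 \<in> {a..b} \<and>
     (\<exists>e>0. \<forall>x\<in>{a..b}. \<bar>x - x0\<bar> < e \<longrightarrow> f x \<le> f x0)"

definition local_min_point :: "real \<Rightarrow> real \<Rightarrow> (real \<Rightarrow> real) \<Rightarrow> real \<Rightarrow> bool" where
  "local_min_point a b f x0 \<longleftrightarrow> x0 \<in> {a..b} \<and>
     (\<exists>e>0. \<forall>x\<in>{a..b}. \<bar>x - x0\<bar> < e \<longrightarrow> f x0 \<le> f x)"

definition discontinuity_point :: "real \<Rightarrow> real \<Rightarrow> (real \<Rightarrow> real) \<Rightarrow> real \<Rightarrow> bool" where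
  "discontinuity_point a b f x0 \<longleftrightarrow> x0 \<in> {a..b} \<and> \<not> continuous (at x0 within {a..b}) f"

definition essential_range :: "real \<Rightarrow> real \<Rightarrow> (real \<Rightarrow> real) \<Rightarrow> real set" where
  "essential_range a b f = {z. \<forall>e>0. emeasure lebesgue {x\<in>{a..b}. \<bar>f x - z\<bar> < e} > 0}"

text \<open>Multisets Lambda_n given as lam i n, i = 1..d n.\<close>
definition has_asymptotic_distribution ::
  "(nat \<Rightarrow> nat) \<Rightarrow> (nat \<Rightarrow> nat \<Rightarrow> real) \<Rightarrow> real \<Rightarrow> real \<Rightarrow> (real \<Rightarrow> real) \<Rightarrow> bool" where
  "has_asymptotic_distribution d lam a b f \<longleftrightarrow>
     (\<forall>F :: complex \<Rightarrow> complex. continuous_on UNIV F \<and> bounded {z. F z \<noteq> 0} \<longrightarrow>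
        (\<lambda>n. (1 / of_nat (d n)) * (\<Sum>i=1..d n. F (complex_of_real (lam i n))))
          \<longlonglongrightarrow> (1 / complex_of_real (b - a)) * integral {a..b} (\<lambda>x. F (complex_of_real (f x))))"

definition asymptotically_uniform_grid ::
  "(nat \<Rightarrow> nat) \<Rightarrow> (nat \<Rightarrow> nat \<Rightarrow> real) \<Rightarrow> real \<Rightarrow> real \<Rightarrow> bool" where
  "asymptotically_uniform_grid d x a b \<longleftrightarrow>
     filterlim d at_top sequentially \<and>
     (\<lambda>n. Max ((\<lambda>i. \<bar>x i n - (a + real i * (b - a) / real (d n))\<bar>) ` {1..d n})) \<longlonglongrightarrow> 0"

end

theory Submission
  imports Defs
begin

lemma match_lemma:
  fixes u :: "'a \<Rightarrow> real" and v :: "'b \<Rightarrow> real"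
  assumes "finite A" "finite B" "card A = card B"
    and c1: "\<And>t. card {i\<in>A. u i \<le> t} \<le> card {j\<in>B. v j \<le> t + \<delta>}"
    and c2: "\<And>t. card {j\<in>B. v j \<le> t} \<le> card {i\<in>A. u i \<le> t + \<delta>}"
  shows "\<exists>\<sigma>. bij_betw \<sigma> B A \<and> (\<forall>j\<in>B. \<bar>u (\<sigma> j) - v j\<bar> \<le> \<delta>)"
  using assms
proof (induction "card A" arbitrary: A B)
  case 0
  then show ?case by (auto simp: bij_betw_def)
next
  case (Suc k)
  have A: "finite A" "A \<noteq> {}" using Suc by auto
  have B: "finite B" "B \<noteq> {}" using Suc by auto
  obtain i0 where i0: "i0 \<in> A" "\<And>i. i \<in> A \<Longrightarrow> u i0 \<le> u i"
  proof -
    have "Min (u ` A) \<in> u ` A" using A by (intro Min_in) auto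
    then obtain i0 where "i0 \<in> A" "u i0 = Min (u ` A)" by auto
    moreover have "\<And>i. i \<in> A \<Longrightarrow> Min (u ` A) \<le> u i" using A by (intro Min_le) auto
    ultimately show ?thesis using that by auto
  qed
  obtain j0 where j0: "j0 \<in> B" "\<And>j. j \<in> B \<Longrightarrow> v j0 \<le> v j"
  proof -
    have "Min (v ` B) \<in> v ` B" using B by (intro Min_in) auto
    then obtain j0 where "j0 \<in> B" "v j0 = Min (v ` B)" by auto
    moreover have "\<And>j. j \<in> B \<Longrightarrow> Min (v ` B) \<le> v j" using B by (intro Min_le) auto
    ultimately show ?thesis using that by auto
  qed
  have "card {i\<in>A. u i \<le> u i0} \<ge> 1"
    proof -
    have "i0 \<in> {i\<in>A. u i \<le> u i0}" using i0 by auto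
    moreover have "finite {i\<in>A. u i \<le> u i0}" using A by auto
    ultimately show ?thesis by (metis One_nat_def Suc_leI card_gt_0_iff empty_iff)
  qed
  hence "card {j\<in>B. v j \<le> u i0 + \<delta>} \<ge> 1" using Suc.prems(4)[of "u i0"] by linarith
  then obtain j where "j \<in> B" "v j \<le> u i0 + \<delta>"
    by (metis (no_types, lifting) Collect_empty_eq card.empty not_one_le_zero)
  hence vj0: "v j0 \<le> u i0 + \<delta>" using j0 by fastforce
  have "card {j\<in>B. v j \<le> v j0} \<ge> 1"
    proof -
    have "j0 \<in> {j\<in>B. v j \<le> v j0}" using j0 by auto
    moreover have "finite {j\<in>B. v j \<le> v j0}" using B by auto
    ultimately show ?thesis by (metis One_nat_def Suc_leI card_gt_0_iff empty_iff)
  qed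
  hence "card {i\<in>A. u i \<le> v j0 + \<delta>} \<ge> 1" using Suc.prems(5)[of "v j0"] by linarith
  then obtain i where "i \<in> A" "u i \<le> v j0 + \<delta>"
    by (metis (no_types, lifting) Collect_empty_eq card.empty not_one_le_zero)
  hence ui0: "u i0 \<le> v j0 + \<delta>" using i0 by fastforce
  define A' where "A' = A - {i0}"
  define B' where "B' = B - {j0}"
  have cA': "card A' = k" using Suc.hyps(2) i0 A by (simp add: A'_def)
  have cB': "card B' = card A'" using Suc.prems(3) cA' Suc.hyps(2) j0 B by (simp add: B'_def)
  have c1': "card {i\<in>A'. u i \<le> t} \<le> card {j\<in>B'. v j \<le> t + \<delta>}" for t
  proof (cases "u i0 \<le> t")
    case True
    have e1: "{i\<in>A'. u i \<le> t} = {i\<in>A. u i \<le> t} - {i0}" by (auto simp: A'_def)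
    have e2: "{j\<in>B'. v j \<le> t + \<delta>} = {j\<in>B. v j \<le> t + \<delta>} - {j0}" by (auto simp: B'_def)
    have "i0 \<in> {i\<in>A. u i \<le> t}" using True i0 by auto
    moreover have "j0 \<in> {j\<in>B. v j \<le> t + \<delta>}" using True j0 vj0 by auto
    ultimately show ?thesis unfolding e1 e2 using Suc.prems(4)[of t] A B
      by (simp add: card_Diff_singleton)
  next
    case False
    hence "{i\<in>A'. u i \<le> t} = {}" using i0 by (force simp: A'_def)
    then show ?thesis by (simp only:) simp
  qed
  have c2': "card {j\<in>B'. v j \<le> t} \<le> card {i\<in>A'. u i \<le> t + \<delta>}" for t
  proof (cases "v j0 \<le> t")
    case True
    have e1: "{j\<in>B'. v j \<le> t} = {j\<in>B. v j \<le> t} - {j0}" by (auto simp: B'_def)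
    have e2: "{i\<in>A'. u i \<le> t + \<delta>} = {i\<in>A. u i \<le> t + \<delta>} - {i0}" by (auto simp: A'_def)
    have "j0 \<in> {j\<in>B. v j \<le> t}" using True j0 by auto
    moreover have "i0 \<in> {i\<in>A. u i \<le> t + \<delta>}" using True i0 ui0 by auto
    ultimately show ?thesis unfolding e1 e2 using Suc.prems(5)[of t] A B
      by (simp add: card_Diff_singleton)
  next
    case False
    hence "{j\<in>B'. v j \<le> t} = {}" using j0 by (force simp: B'_def)
    then show ?thesis by (simp only:) simp
  qed
  obtain \<sigma> where \<sigma>: "bij_betw \<sigma> B' A'" "\<forall>j\<in>B'. \<bar>u (\<sigma> j) - v j\<bar> \<le> \<delta>"
    using Suc.hyps(1)[OF cA'[symmetric] _ _ cB'[symmetric] c1' c2'] A B by (auto simp: A'_def B'_def)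
  define \<sigma>' where "\<sigma>' = \<sigma>(j0 := i0)"
  have "bij_betw \<sigma>' B' A'"
    using \<sigma>(1) by (rule bij_betw_cong[THEN iffD1, rotated]) (auto simp: \<sigma>'_def B'_def)
  hence "bij_betw \<sigma>' (B' \<union> {j0}) (A' \<union> {\<sigma>' j0})"
    by (intro notIn_Un_bij_betw) (auto simp: A'_def B'_def \<sigma>'_def)
  moreover have "B' \<union> {j0} = B" "A' \<union> {\<sigma>' j0} = A" using i0 j0 by (auto simp: A'_def B'_def \<sigma>'_def)
  ultimately have "bij_betw \<sigma>' B A" by simp
  moreover have "\<forall>j\<in>B. \<bar>u (\<sigma>' j) - v j\<bar> \<le> \<delta>"
    using \<sigma>(2) vj0 ui0 by (auto simp: \<sigma>'_def B'_def)
  ultimately show ?case by blast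
qed

lemma diag_lemma:
  fixes g :: "nat \<Rightarrow> 'x \<Rightarrow> real"
  assumes ex: "\<And>n. \<exists>x. Q n x" and nn: "\<And>n x. 0 \<le> g n x"
    and ev: "\<And>\<epsilon>. \<epsilon> > 0 \<Longrightarrow> eventually (\<lambda>n. \<exists>x. Q n x \<and> g n x \<le> \<epsilon>) sequentially"
  shows "\<exists>X. (\<forall>n. Q n (X n)) \<and> (\<lambda>n. g n (X n)) \<longlonglongrightarrow> 0"
proof -
  define e where "e n = Inf (g n ` {x. Q n x})" for n
  have ne: "g n ` {x. Q n x} \<noteq> {}" for n using ex[of n] by auto
  have bb: "bdd_below (g n ` {x. Q n x})" for n using nn by (auto intro!: bdd_belowI[of _ 0])
  have "\<forall>n. \<exists>x. Q n x \<and> g n x < e n + 1 / (Suc n)"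
  proof
    fix n
    have "e n < e n + 1 / Suc n" by simp
    then obtain y where "y \<in> g n ` {x. Q n x}" "y < e n + 1 / Suc n"
      using cInf_less_iff[OF ne bb] unfolding e_def by blast
    then show "\<exists>x. Q n x \<and> g n x < e n + 1 / (Suc n)" by auto
  qed
  then obtain X where X0: "\<forall>n. Q n (X n) \<and> g n (X n) < e n + 1 / Suc n" by (rule choice[THEN exE]) blast
  have X: "\<And>n. Q n (X n)" "\<And>n. g n (X n) < e n + 1 / Suc n" using X0 by auto
  have "(\<lambda>n. g n (X n)) \<longlonglongrightarrow> 0"
  proof (rule tendstoI)
    fix r :: real assume r: "r > 0"
    have ev1: "eventually (\<lambda>n. e n \<le> r/2) sequentially"
    proof -
      have "eventually (\<lambda>n. \<exists>x. Q n x \<and> g n x \<le> r/2) sequentially" using ev[of "r/2"] r by simp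
      then show ?thesis
    proof (rule eventually_mono)
      fix n assume "\<exists>x. Q n x \<and> g n x \<le> r/2"
      then obtain x where "Q n x" "g n x \<le> r/2" by blast
      then show "e n \<le> r/2" unfolding e_def
        using cInf_lower[OF _ bb[of n], of "g n x"] \<open>Q n x\<close> by force
    qed
    qed
    have ev2: "eventually (\<lambda>n. 1 / real (Suc n) < r/2) sequentially"
    proof -
      have "(\<lambda>n. inverse (real (Suc n))) \<longlonglongrightarrow> 0" by (rule LIMSEQ_inverse_real_of_nat)
      from order_tendstoD(2)[OF this, of "r/2"] r show ?thesis by (simp add: inverse_eq_divide)
    qed
    show "eventually (\<lambda>n. dist (g n (X n)) 0 < r) sequentially"
      using ev1 ev2
    proof eventually_elim
      case (elim n)
      then show ?case using X(2)[of n] nn[of n "X n"] by auto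
    qed
  qed
  then show ?thesis using X(1) by blast
qed

lemma cell_iff:
  fixes a b x :: real
  assumes ab: "a < b" and d: "d > 0" and i: "i \<ge> 1"
  shows "(a + real (i-1)*(b-a)/real d < x \<and> x \<le> a + real i*(b-a)/real d) \<longleftrightarrow>
         \<lceil>(x-a)*real d/(b-a)\<rceil> = int i"
proof -
  have ba: "b - a > 0" using ab by simp
  have dd: "real d > 0" using d by simp
  have r1: "real (i-1) = real i - 1" using i by (simp add: of_nat_diff)
  have e1: "a + r*(b-a)/real d < x \<longleftrightarrow> r < (x-a)*real d/(b-a)" for r
    using ba dd by (simp add: field_simps)
  have e2: "x \<le> a + r*(b-a)/real d \<longleftrightarrow> (x-a)*real d/(b-a) \<le> r" for r
    using ba dd by (simp add: field_simps)
  show ?thesis unfolding e1 e2 r1 ceiling_eq_iff by simp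
qed

lemma cell_exists:
  fixes a b x :: real
  assumes ab: "a < b" and d: "d > 0" and x: "a < x" "x \<le> b"
  defines "k \<equiv> nat \<lceil>(x-a)*real d/(b-a)\<rceil>"
  shows "k \<in> {1..d}" "\<lceil>(x-a)*real d/(b-a)\<rceil> = int k"
proof -
  have ba: "b - a > 0" using ab by simp
  have dd: "real d > 0" using d by simp
  have t0: "(x-a)*real d/(b-a) > 0" using ba dd x by simp
  have t1: "(x-a)*real d/(b-a) \<le> real d" using ba dd x by (simp add: field_simps)
  have c1: "\<lceil>(x-a)*real d/(b-a)\<rceil> \<ge> 1" using t0 by (metis ceiling_le_zero int_one_le_iff_zero_less not_less zero_less_ceiling)
  have c2: "\<lceil>(x-a)*real d/(b-a)\<rceil> \<le> int d" using t1 by (simp add: ceiling_le_iff)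
  show "\<lceil>(x-a)*real d/(b-a)\<rceil> = int k" using c1 unfolding k_def by simp
  show "k \<in> {1..d}" using c1 c2 unfolding k_def by (simp add: le_nat_iff nat_le_iff)
qed

lemma indicator_has_integral:
  fixes a b p q :: real
  assumes "a \<le> p" "p \<le> q" "q \<le> b"
  shows "(indicator {p<..q} has_integral (q - p)) {a..b}"
proof -
  have "((\<lambda>x. 1::real) has_integral (q - p)) {p..q}"
    using has_integral_const_real[of "1::real" p q] assms by simp
  hence "((\<lambda>x. 1::real) has_integral (q - p)) {p<..q}"
    by (subst (asm) has_integral_spike_set_eq[of "{p..q}" "{p<..q}"]) (rule negligible_subset[of "{p}"], auto)+
  hence "((\<lambda>x. 1::real) has_integral (q - p)) ({p<..q} \<inter> {a..b})"
    using assms by (simp add: Int_absorb2 subset_iff)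
  hence "((\<lambda>x. if x \<in> {p<..q} then 1::real else 0) has_integral (q - p)) {a..b}"
    by (subst has_integral_restrict_Int)
  moreover have "indicator {p<..q} = (\<lambda>x. if x \<in> {p<..q} then 1::real else 0)"
    by (auto simp: indicator_def)
  ultimately show ?thesis by simp
qed

lemma cell_value:
  fixes a b x :: real and g :: "real \<Rightarrow> real"
  assumes ab: "a < b" and d: "d > 0" and x: "a < x" "x \<le> b"
  defines "k \<equiv> nat \<lceil>(x-a)*real d/(b-a)\<rceil>"
  shows "(\<Sum>i\<in>{1..d}. g (a + real i * (b - a) / real d) *
            indicator {a + real (i-1) * (b - a) / real d<..a + real i * (b - a) / real d} x)
         = g (a + real k * (b - a) / real d)"
    and "a + real k * (b - a) / real d \<ge> x"
    and "a + real k * (b - a) / real d - x \<le> (b - a) / real d"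
    and "a + real k * (b - a) / real d \<le> b"
proof -
  have k: "k \<in> {1..d}" "\<lceil>(x-a)*real d/(b-a)\<rceil> = int k"
    using cell_exists[OF ab d x] unfolding k_def by auto
  have ink: "a + real (k-1)*(b-a)/real d < x \<and> x \<le> a + real k*(b-a)/real d"
    using cell_iff[OF ab d, of k x] k by auto
  have notin: "\<not> (a + real (i-1)*(b-a)/real d < x \<and> x \<le> a + real i*(b-a)/real d)"
    if "i \<in> {1..d}" "i \<noteq> k" for i
    using cell_iff[OF ab d, of i x] k that by auto
  have "(\<Sum>i\<in>{1..d}. g (a + real i * (b - a) / real d) *
            indicator {a + real (i-1) * (b - a) / real d<..a + real i * (b - a) / real d} x)
       = g (a + real k * (b - a) / real d) *
            indicator {a + real (k-1) * (b - a) / real d<..a + real k * (b - a) / real d} x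
         + (\<Sum>i\<in>{1..d} - {k}. g (a + real i * (b - a) / real d) *
            indicator {a + real (i-1) * (b - a) / real d<..a + real i * (b - a) / real d} x)"
    by (rule sum.remove) (use k(1) in auto)
  also have "(\<Sum>i\<in>{1..d} - {k}. g (a + real i * (b - a) / real d) *
            indicator {a + real (i-1) * (b - a) / real d<..a + real i * (b - a) / real d} x) = 0"
  proof (intro sum.neutral ballI)
    fix i assume "i \<in> {1..d} - {k}"
    then have "x \<notin> {a + real (i-1) * (b - a) / real d<..a + real i * (b - a) / real d}"
      using notin[of i] by auto
    then show "g (a + real i * (b - a) / real d) *
            indicator {a + real (i-1) * (b - a) / real d<..a + real i * (b - a) / real d} x = 0" by simp
  qed
  finally show "(\<Sum>i\<in>{1..d}. g (a + real i * (b - a) / real d) *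
            indicator {a + real (i-1) * (b - a) / real d<..a + real i * (b - a) / real d} x)
         = g (a + real k * (b - a) / real d)"
    using ink by (simp add: indicator_def)
  show "a + real k * (b - a) / real d \<ge> x" using ink by simp
  have r1: "real (k-1) = real k - 1" using k by (simp add: of_nat_diff)
  have "a + real k * (b - a) / real d - (a + real (k-1)*(b-a)/real d) = (b - a) / real d"
    unfolding r1 using d by (simp add: field_simps)
  then show "a + real k * (b - a) / real d - x \<le> (b - a) / real d" using ink by linarith
  have "real k * (b - a) / real d \<le> real d * (b - a) / real d"
    using k ab by (intro divide_right_mono mult_right_mono) auto
  then show "a + real k * (b - a) / real d \<le> b" using d by simp
qed

lemma riemann_sum:
  fixes h :: "real \<Rightarrow> real" and a b :: real and d :: "nat \<Rightarrow> nat" and P :: "real set"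
  assumes ab: "a < b" and hint: "h integrable_on {a..b}" and hB: "\<And>x. x \<in> {a..b} \<Longrightarrow> \<bar>h x\<bar> \<le> B"
    and hc: "\<And>x. x \<in> {a<..<b} - P \<Longrightarrow> isCont h x" and P: "finite P"
    and dinf: "filterlim d at_top sequentially"
  shows "(\<lambda>n. (1 / real (d n)) * (\<Sum>i\<in>{1..d n}. h (a + real i * (b - a) / real (d n))))
           \<longlonglongrightarrow> (1/(b-a)) * integral {a..b} h"
proof -
  define y where "y n i = a + real i * (b - a) / real (d n)" for n i
  define hs where "hs n x = (\<Sum>i\<in>{1..d n}. h (y n i) * indicator {y n (i-1)<..y n i} x)" for n x
  have ba: "b - a > 0" using ab by simp
  have B0: "B \<ge> 0" using hB[of a] ab by auto
  have hs_int: "(hs n has_integral (\<Sum>i\<in>{1..d n}. h (y n i) * ((b-a)/real (d n)))) {a..b}" for n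
  proof -
    have "((\<lambda>x. h (y n i) * indicator {y n (i-1)<..y n i} x) has_integral (h (y n i) * ((b-a)/real (d n)))) {a..b}"
      if i: "i \<in> {1..d n}" for i
    proof -
      have dn: "real (d n) > 0" using i by auto
      have r1: "real (i-1) = real i - 1" using i by (simp add: of_nat_diff)
      have "a \<le> y n (i-1)" unfolding y_def using dn ba by simp
      moreover have "y n (i-1) \<le> y n i" unfolding y_def r1 using dn ba by (simp add: field_simps)
      moreover have "y n i \<le> b"
      proof -
        have "real i * (b - a) / real (d n) \<le> real (d n) * (b - a) / real (d n)"
          using i ab by (intro divide_right_mono mult_right_mono) auto
        then show ?thesis unfolding y_def using dn by simp
      qed
      moreover have "y n i - y n (i-1) = (b-a)/real (d n)" unfolding y_def r1 using dn by (simp add: field_simps)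
      ultimately show ?thesis
        using has_integral_mult_right[OF indicator_has_integral[of a "y n (i-1)" "y n i" b], of "h (y n i)"]
        by simp
    qed
    then show ?thesis unfolding hs_def by (rule has_integral_sum[OF finite_atLeastAtMost])
  qed
  have avg: "(1/real(d n)) * (\<Sum>i\<in>{1..d n}. h (y n i)) = (1/(b-a)) * integral {a..b} (hs n)" for n
  proof -
    have "integral {a..b} (hs n) = ((b-a)/real (d n)) * (\<Sum>i\<in>{1..d n}. h (y n i))"
      using integral_unique[OF hs_int[of n]] by (simp add: sum_distrib_left mult.commute)
    then show ?thesis using ba by simp
  qed
  define S2 where "S2 = {a<..<b} - P"
  have S2sub: "S2 \<subseteq> {a..b}" unfolding S2_def by auto
  have negl: "negligible ({a..b} - S2)"
    by (rule negligible_subset[of "insert a (insert b P)"]) (use P in \<open>auto simp: S2_def\<close>)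
  have n1: "negligible {x \<in> {a..b} - S2. g x \<noteq> 0}" for g :: "real \<Rightarrow> real"
    by (rule negligible_subset[OF negl]) auto
  have n2: "negligible {x \<in> S2 - {a..b}. g x \<noteq> 0}" for g :: "real \<Rightarrow> real"
    by (rule negligible_subset[of "{}"]) (use S2sub in auto)
  have spike_int: "g integrable_on S2" if "g integrable_on {a..b}" for g :: "real \<Rightarrow> real"
    using integrable_spike_set[OF that n1 n2] .
  have spike_eq: "integral S2 g = integral {a..b} g" for g :: "real \<Rightarrow> real"
    using integral_spike_set[OF n2 n1] .
  have ev_pos: "eventually (\<lambda>n. d n > 0) sequentially"
  proof -
    have "eventually (\<lambda>n. 1 \<le> d n) sequentially" using dinf unfolding filterlim_at_top by blast
    then show ?thesis by (rule eventually_mono) simp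
  qed
  have dlim: "(\<lambda>n. (b - a) / real (d n)) \<longlonglongrightarrow> 0"
    by (rule tendsto_divide_0[OF tendsto_const filterlim_at_top_imp_at_infinity[OF filterlim_compose[OF filterlim_real_sequentially dinf]]])
  have conv: "(\<lambda>n. hs n x) \<longlonglongrightarrow> h x" if x: "x \<in> S2" for x
  proof -
    have xab: "a < x" "x \<le> b" using x unfolding S2_def by auto
    define k where "k n = nat \<lceil>(x-a)*real (d n)/(b-a)\<rceil>" for n
    define z where "z n = (if d n > 0 then y n (k n) else x)" for n
    have ev: "eventually (\<lambda>n. hs n x = h (z n)) sequentially"
      using ev_pos
    proof (rule eventually_mono)
      fix n assume dn: "d n > 0"
      show "hs n x = h (z n)"
        using cell_value(1)[OF ab dn xab, of h] dn unfolding hs_def z_def y_def k_def by simp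
    qed
    have zb: "norm (z n - x) \<le> (b - a) / real (d n)" for n
    proof (cases "d n > 0")
      case True
      have "z n = y n (k n)" using True by (simp add: z_def)
      then show ?thesis using cell_value(2,3)[OF ab True xab] unfolding y_def k_def by simp
    next
      case False
      then show ?thesis by (simp add: z_def)
    qed
    have "(\<lambda>n. z n - x) \<longlonglongrightarrow> 0"
      by (rule Lim_null_comparison[OF always_eventually dlim]) (rule allI, rule zb)
    hence zx: "z \<longlonglongrightarrow> x" by (simp only: LIM_zero_iff)
    have hcx: "isCont h x" using hc[of x] x unfolding S2_def by blast
    have "(\<lambda>n. h (z n)) \<longlonglongrightarrow> h x" by (rule isCont_tendsto_compose[OF hcx zx])
    then show ?thesis using tendsto_cong[OF ev] by simp
  qed
  have bnd: "norm (hs n x) \<le> B" if x: "x \<in> S2" for n x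
  proof (cases "d n > 0")
    case True
    have xab: "a < x" "x \<le> b" using x unfolding S2_def by auto
    have "hs n x = h (y n (nat \<lceil>(x-a)*real (d n)/(b-a)\<rceil>))"
      using cell_value(1)[OF ab True xab, of h] by (simp add: hs_def y_def)
    moreover have "y n (nat \<lceil>(x-a)*real (d n)/(b-a)\<rceil>) \<in> {a..b}"
      using cell_value(2,4)[OF ab True xab] xab by (simp add: y_def)
    ultimately show ?thesis using hB by auto
  next
    case False
    then show ?thesis using B0 by (simp add: hs_def)
  qed
  have dct: "(\<lambda>n. integral S2 (hs n)) \<longlonglongrightarrow> integral S2 h"
  proof (rule dominated_convergence(2))
    show "hs n integrable_on S2" for n by (rule spike_int[OF has_integral_integrable[OF hs_int[of n]]])
    show "(\<lambda>x. B) integrable_on S2" by (rule spike_int[OF integrable_const_ivl])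
    show "norm (hs n x) \<le> B" if "x \<in> S2" for n x using bnd that .
    show "(\<lambda>n. hs n x) \<longlonglongrightarrow> h x" if "x \<in> S2" for x using conv that .
  qed
  hence "(\<lambda>n. (1/(b-a)) * integral {a..b} (hs n)) \<longlonglongrightarrow> (1/(b-a)) * integral {a..b} h"
    unfolding spike_eq by (intro tendsto_mult tendsto_const)
  then show ?thesis unfolding avg[symmetric] y_def .
qed

locale thm_setting =
  fixes a b :: real and f :: "real \<Rightarrow> real"
  assumes ab: "a < b"
    and bdd: "bounded (f ` {a..b})"
    and fin_max: "finite {x. local_max_point a b f x}"
    and fin_min: "finite {x. local_min_point a b f x}"
    and fin_disc: "finite {x. discontinuity_point a b f x}"
    and ER: "essential_range a b f = {Inf (f ` {a..b}) .. Sup (f ` {a..b})}"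
begin

definition "P = {x. local_max_point a b f x} \<union> {x. local_min_point a b f x} \<union>
                {x. discontinuity_point a b f x} \<union> {a, b}"

lemma finP: "finite P" unfolding P_def using fin_max fin_min fin_disc by auto

lemma abP: "a \<in> P" "b \<in> P" unfolding P_def by auto

lemma cont_at: assumes "x \<in> {a<..<b}" "x \<notin> P" shows "isCont f x"
proof -
  have "\<not> discontinuity_point a b f x" using assms(2) unfolding P_def by auto
  hence "continuous (at x within {a..b}) f" using assms(1) unfolding discontinuity_point_def by auto
  moreover have "x \<in> interior {a..b}" using assms(1) by simp
  ultimately show ?thesis using at_within_interior by metis
qed

lemma cont_within: assumes "x \<in> {a..b}" "x \<notin> P" shows "continuous (at x within {a..b}) f"
  using assms unfolding P_def discontinuity_point_def by auto

lemma max_is_local: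
  assumes "x1 < t" "t < x2" "{x1..x2} \<subseteq> {a..b}" "\<And>y. y \<in> {x1..x2} \<Longrightarrow> f y \<le> f t"
  shows "t \<in> P"
proof -
  have "local_max_point a b f t"
    unfolding local_max_point_def
  proof (intro conjI exI[of _ "min (t - x1) (x2 - t)"] ballI impI)
    show "t \<in> {a..b}" using assms by auto
    show "0 < min (t - x1) (x2 - t)" using assms by auto
    fix x assume "x \<in> {a..b}" "\<bar>x - t\<bar> < min (t - x1) (x2 - t)"
    then have "x \<in> {x1..x2}" by auto
    then show "f x \<le> f t" using assms(4) by auto
  qed
  then show ?thesis unfolding P_def by auto
qed

lemma min_is_local:
  assumes "x1 < t" "t < x2" "{x1..x2} \<subseteq> {a..b}" "\<And>y. y \<in> {x1..x2} \<Longrightarrow> f t \<le> f y"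
  shows "t \<in> P"
proof -
  have "local_min_point a b f t"
    unfolding local_min_point_def
  proof (intro conjI exI[of _ "min (t - x1) (x2 - t)"] ballI impI)
    show "t \<in> {a..b}" using assms by auto
    show "0 < min (t - x1) (x2 - t)" using assms by auto
    fix x assume "x \<in> {a..b}" "\<bar>x - t\<bar> < min (t - x1) (x2 - t)"
    then have "x \<in> {x1..x2}" by auto
    then show "f t \<le> f x" using assms(4) by auto
  qed
  then show ?thesis unfolding P_def by auto
qed

lemma cont_seg:
  assumes "{c..e} \<subseteq> {a..b}" "{c..e} \<inter> P = {}"
  shows "continuous_on {c..e} f"
proof (rule continuous_at_imp_continuous_on, rule ballI)
  fix x assume x: "x \<in> {c..e}"
  then have "x \<noteq> a" "x \<noteq> b" "x \<notin> P" using assms abP by auto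
  moreover have "x \<in> {a..b}" using x assms by auto
  ultimately show "isCont f x" by (intro cont_at) auto
qed

lemma inj_seg:
  assumes "{c..e} \<subseteq> {a..b}" "{c..e} \<inter> P = {}"
  shows "inj_on f {c..e}"
proof -
  have key: False if x: "x1 \<in> {c..e}" "x2 \<in> {c..e}" "x1 < x2" "f x1 = f x2" for x1 x2
  proof -
    have sub: "{x1..x2} \<subseteq> {c..e}" using x by auto
    have sub2: "{x1..x2} \<subseteq> {a..b}" using sub assms by auto
    have cont: "continuous_on {x1..x2} f"
      using cont_seg[OF assms] sub by (rule continuous_on_subset)
    obtain z where z: "z \<in> {x1..x2}" "\<And>y. y \<in> {x1..x2} \<Longrightarrow> f y \<le> f z"
      using continuous_attains_sup[OF compact_Icc _ cont] x by auto
    obtain w where w: "w \<in> {x1..x2}" "\<And>y. y \<in> {x1..x2} \<Longrightarrow> f w \<le> f y"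
      using continuous_attains_inf[OF compact_Icc _ cont] x by auto
    show False
    proof (cases "f z > f x1")
      case True
      then have "x1 < z" "z < x2" using z x by (auto simp: le_less)
      then have "z \<in> P" using max_is_local[OF _ _ sub2 z(2)] by auto
      moreover have "z \<in> {c..e}" using z sub by auto
        ultimately show False using assms(2) by blast
    next
      case False
      show False
      proof (cases "f w < f x1")
        case True
        then have "x1 < w" "w < x2" using w x by (auto simp: le_less)
        then have "w \<in> P" using min_is_local[OF _ _ sub2 w(2)] by auto
        moreover have "w \<in> {c..e}" using w sub by auto
        ultimately show False using assms(2) by blast
      next
        case False2: False
        define t where "t = (x1 + x2) / 2"
        have tt: "x1 < t" "t < x2" using x unfolding t_def by auto
        have "f t = f x1" using z(2)[of t] w(2)[of t] False False2 tt by auto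
        moreover have "f y \<le> f z" if "y \<in> {x1..x2}" for y using z(2) that .
        ultimately have "t \<in> P" using max_is_local[OF tt sub2] False z(2) by force
        moreover have "t \<in> {c..e}" using tt sub by auto
        ultimately show False using assms(2) by blast
      qed
    qed
  qed
  show ?thesis
  proof (rule inj_onI)
    fix x1 x2 assume "x1 \<in> {c..e}" "x2 \<in> {c..e}" "f x1 = f x2"
    then show "x1 = x2" using key[of x1 x2] key[of x2 x1] by (cases x1 x2 rule: linorder_cases) auto
  qed
qed

lemma good_seg:
  assumes y: "y \<in> {a..b}" "\<forall>p\<in>P. \<eta> \<le> \<bar>y - p\<bar>" and e: "0 < e'" "e' < \<eta>"
  shows "{y-e'..y+e'} \<subseteq> {a..b}" "{y-e'..y+e'} \<inter> P = {}" "{y-e'..y+e'} \<subseteq> {a<..<b} - P"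
proof -
  have "\<eta> \<le> \<bar>y - a\<bar>" "\<eta> \<le> \<bar>y - b\<bar>" using y abP by auto
  then have ya: "y - e' > a" "y + e' < b" using y e by auto
  then show "{y-e'..y+e'} \<subseteq> {a..b}" by auto
  have "z \<notin> P" if z: "z \<in> {y-e'..y+e'}" for z
  proof
    assume "z \<in> P"
    then have "\<eta> \<le> \<bar>y - z\<bar>" using y by auto
    moreover have "\<bar>y - z\<bar> \<le> e'" using z by auto
    ultimately show False using e by auto
  qed
  then show "{y-e'..y+e'} \<inter> P = {}" by auto
  then show "{y-e'..y+e'} \<subseteq> {a<..<b} - P" using ya by auto
qed

lemma good:
  assumes e: "0 < e'" "e' < \<eta>"
  shows "\<exists>\<rho>>0. \<forall>y\<in>{a..b}. (\<forall>p\<in>P. \<eta> \<le> \<bar>y - p\<bar>) \<longrightarrow>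
            (\<forall>w. \<bar>w - f y\<bar> \<le> \<rho> \<longrightarrow> (\<exists>x\<in>{a..b}. \<bar>x - y\<bar> \<le> e' \<and> f x = w))"
proof -
  define K where "K = {a..b} \<inter> (\<Inter>p\<in>P. {y. \<eta> \<le> \<bar>y - p\<bar>})"
  have Kiff: "y \<in> K \<longleftrightarrow> y \<in> {a..b} \<and> (\<forall>p\<in>P. \<eta> \<le> \<bar>y - p\<bar>)" for y
    unfolding K_def by auto
  have "closed (\<Inter>p\<in>P. {y::real. \<eta> \<le> \<bar>y - p\<bar>})"
    by (intro closed_INT ballI closed_Collect_le continuous_intros)
  hence cK: "compact K" unfolding K_def by (intro compact_Int_closed) auto
  define r where "r y = min \<bar>f (y + e') - f y\<bar> \<bar>f (y - e') - f y\<bar>" for y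
  have mono: "(f (y-e') < f y \<and> f y < f (y+e')) \<or> (f (y+e') < f y \<and> f y < f (y-e'))" if "y \<in> K" for y
  proof -
    have s: "{y-e'..y+e'} \<subseteq> {a..b}" "{y-e'..y+e'} \<inter> P = {}"
      using good_seg[of y \<eta> e'] that e by (auto simp: Kiff)
    show ?thesis
      by (rule continuous_inj_imp_mono[OF _ _ cont_seg[OF s] inj_seg[OF s]]) (use e in auto)
  qed
  have rpos: "r y > 0" if "y \<in> K" for y using mono[OF that] unfolding r_def by auto
  have rcont: "continuous_on K r"
  proof (rule continuous_at_imp_continuous_on, rule ballI)
    fix y assume yK: "y \<in> K"
    have s: "{y-e'..y+e'} \<subseteq> {a<..<b} - P" using good_seg[of y \<eta> e'] yK e by (auto simp: Kiff)
    have m: "y \<in> {y-e'..y+e'}" "y + e' \<in> {y-e'..y+e'}" "y - e' \<in> {y-e'..y+e'}" using e by auto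
    have c0: "isCont f y" "isCont f (y + e')" "isCont f (y - e')"
      using cont_at subsetD[OF s m(1)] cont_at subsetD[OF s m(2)] cont_at subsetD[OF s m(3)] by auto
    have c1: "isCont (\<lambda>y. f (y + e')) y"
      using continuous_at_compose[of y "\<lambda>y. y + e'" f] c0(2) by (simp add: o_def)
    have c2: "isCont (\<lambda>y. f (y - e')) y"
      using continuous_at_compose[of y "\<lambda>y. y - e'" f] c0(3) by (simp add: o_def)
    show "isCont r y" unfolding r_def
      by (intro continuous_intros c0 c1 c2)
  qed
  obtain \<rho> where \<rho>: "\<rho> > 0" "\<And>y. y \<in> K \<Longrightarrow> \<rho> \<le> r y"
  proof (cases "K = {}")
    case True
    then show ?thesis using that[of 1] by auto
  next
    case False
    obtain y0 where "y0 \<in> K" "\<And>y. y \<in> K \<Longrightarrow> r y0 \<le> r y"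
      using continuous_attains_inf[OF cK False rcont] by auto
    then show ?thesis using that[of "r y0"] rpos by auto
  qed
  show ?thesis
  proof (intro exI[of _ \<rho>] conjI \<rho>(1) ballI impI allI)
    fix y w assume y: "y \<in> {a..b}" "\<forall>p\<in>P. \<eta> \<le> \<bar>y - p\<bar>" and w: "\<bar>w - f y\<bar> \<le> \<rho>"
    have yK: "y \<in> K" using y by (simp add: Kiff)
    have s: "{y-e'..y+e'} \<subseteq> {a..b}" "{y-e'..y+e'} \<inter> P = {}"
      using good_seg[of y \<eta> e'] y e by auto
    have cs: "continuous_on {y-e'..y+e'} f" by (rule cont_seg[OF s])
    have wr: "\<bar>w - f y\<bar> \<le> r y" using w \<rho>(2)[OF yK] by simp
    obtain x where x: "y-e' \<le> x" "x \<le> y+e'" "f x = w"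
      using mono[OF yK]
    proof
      assume m: "f (y-e') < f y \<and> f y < f (y+e')"
      then have "f (y-e') \<le> w" "w \<le> f (y+e')" using wr unfolding r_def by auto
      then show ?thesis using IVT'[of f "y-e'" w "y+e'", OF _ _ _ cs] e that by auto
    next
      assume m: "f (y+e') < f y \<and> f y < f (y-e')"
      then have "f (y+e') \<le> w" "w \<le> f (y-e')" using wr unfolding r_def by auto
      then show ?thesis using IVT2'[of f "y+e'" w "y-e'", OF _ _ _ cs] e that by auto
    qed
    show "\<exists>x\<in>{a..b}. \<bar>x - y\<bar> \<le> e' \<and> f x = w"
      using x s(1) by (intro bexI[of _ x]) auto
  qed
qed

definition "m = Inf (f ` {a..b})"
definition "M = Sup (f ` {a..b})"

lemma fm: assumes "x \<in> {a..b}" shows "m \<le> f x" "f x \<le> M"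
  using assms bounded_imp_bdd_below[OF bdd] bounded_imp_bdd_above[OF bdd]
  unfolding m_def M_def by (auto intro: cInf_lower cSup_upper)

lemma mM: "m < M"
proof (rule ccontr)
  assume "\<not> m < M"
  moreover have "m \<le> M" using fm[of a] ab by auto
  ultimately have eq: "f x = m" if "x \<in> {a..b}" for x using fm[OF that] by auto
  have "{a..b} \<subseteq> {x. local_max_point a b f x}"
  proof
    fix x assume x: "x \<in> {a..b}"
    have "local_max_point a b f x" unfolding local_max_point_def
      using x eq by (intro conjI exI[of _ 1]) auto
    then show "x \<in> {x. local_max_point a b f x}" by simp
  qed
  then have "finite {a..b}" using fin_max finite_subset by blast
  then show False using infinite_Icc[OF ab] by simp
qed

lemma ERiff: "essential_range a b f = {m..M}" using ER unfolding m_def M_def .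

lemma cont_comp:
  fixes \<phi> :: "real \<Rightarrow> real"
  assumes "continuous_on UNIV \<phi>" "x \<in> {a<..<b} - P"
  shows "isCont (\<lambda>x. \<phi> (f x)) x"
proof -
  have "isCont f x" using assms(2) by (intro cont_at) auto
  moreover have "isCont \<phi> (f x)" using assms(1) by (simp add: continuous_on_eq_continuous_at)
  ultimately show ?thesis using continuous_at_compose[of x f \<phi>] by (simp add: o_def)
qed

lemma bnd_comp:
  fixes \<phi> :: "real \<Rightarrow> real"
  assumes "continuous_on UNIV \<phi>"
  obtains B where "\<And>x. x \<in> {a..b} \<Longrightarrow> \<bar>\<phi> (f x)\<bar> \<le> B"
proof -
  have "compact (\<phi> ` {m..M})"
    by (rule compact_continuous_image[OF continuous_on_subset[OF assms] compact_Icc]) simp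
  then obtain B where B: "\<And>u. u \<in> \<phi> ` {m..M} \<Longrightarrow> norm u \<le> B"
    using compact_imp_bounded bounded_iff by metis
  show ?thesis
  proof (rule that)
    fix x assume "x \<in> {a..b}"
    then have "f x \<in> {m..M}" using fm by auto
    then show "\<bar>\<phi> (f x)\<bar> \<le> B" using B by auto
  qed
qed

lemma int_comp:
  fixes \<phi> :: "real \<Rightarrow> real"
  assumes phi: "continuous_on UNIV \<phi>"
  shows "(\<lambda>x. \<phi> (f x)) integrable_on {a..b}"
proof -
  define S where "S = {a..b} - P"
  have Ssets: "S \<in> sets lebesgue"
  proof -
    have "P \<in> lmeasurable" using finP by (intro lmeasurable_compact finite_imp_compact)
    then have "S \<in> lmeasurable" unfolding S_def by (intro fmeasurable_Diff) auto
    then show ?thesis by (rule fmeasurableD)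
  qed
  have cS: "continuous_on S f"
    unfolding continuous_on_eq_continuous_within
  proof
    fix x assume "x \<in> S"
    then have "continuous (at x within {a..b}) f" using cont_within unfolding S_def by auto
    then show "continuous (at x within S) f" by (rule continuous_within_subset) (auto simp: S_def)
  qed
  have c2: "continuous_on S (\<lambda>x. \<phi> (f x))"
    by (rule continuous_on_compose2[OF phi cS]) auto
  have meas: "(\<lambda>x. \<phi> (f x)) \<in> borel_measurable (lebesgue_on S)"
    by (rule continuous_imp_measurable_on_sets_lebesgue[OF c2 Ssets])
  obtain B where B: "\<And>x. x \<in> {a..b} \<Longrightarrow> \<bar>\<phi> (f x)\<bar> \<le> B" using bnd_comp[OF phi] by blast
  have negl: "negligible ({a..b} - S)" unfolding S_def using finP
    by (intro negligible_finite) (auto intro: finite_subset)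
  have n1: "negligible {x \<in> {a..b} - S. g x \<noteq> 0}" for g :: "real \<Rightarrow> real"
    by (rule negligible_subset[OF negl]) auto
  have n2: "negligible {x \<in> S - {a..b}. g x \<noteq> 0}" for g :: "real \<Rightarrow> real"
    by (rule negligible_subset[of "{}"]) (auto simp: S_def)
  have "(\<lambda>x. B) integrable_on S" using integrable_spike_set[OF integrable_const_ivl n1 n2] .
  then have "(\<lambda>x. \<phi> (f x)) integrable_on S"
    by (rule measurable_bounded_by_integrable_imp_integrable_real[OF meas _ _ Ssets]) (use B in \<open>auto simp: S_def\<close>)
  then show ?thesis using integrable_spike_set[OF _ n2 n1] by blast
qed

lemma pos_int:
  fixes \<phi> :: "real \<Rightarrow> real"
  assumes z: "z \<in> {m..M}" and e: "e > 0" and phi: "continuous_on UNIV \<phi>"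
    and nn: "\<And>u. 0 \<le> \<phi> u" and c0: "c0 > 0" and big: "\<And>u. \<bar>u - z\<bar> < e \<Longrightarrow> c0 \<le> \<phi> u"
  shows "integral {a..b} (\<lambda>x. \<phi> (f x)) > 0"
proof -
  define A where "A = {x\<in>{a..b}. \<bar>f x - z\<bar> < e}"
  have "z \<in> essential_range a b f" using z ERiff by simp
  then have pos: "emeasure lebesgue A > 0" unfolding essential_range_def A_def using e by auto
  then have As: "A \<in> sets lebesgue" using emeasure_notin_sets by fastforce
  have Al: "A \<in> lmeasurable"
    by (rule fmeasurableI2[OF lmeasurable_interval(1) _ As]) (auto simp: A_def)
  have mpos: "measure lebesgue A > 0"
    using pos emeasure_eq_measure2[OF Al] by simp
  have i1: "(\<lambda>x. 1::real) integrable_on A" using Al lmeasurable_iff_integrable_on by blast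
  have eqA: "integral {a..b} (\<lambda>x. if x \<in> A then c0 else 0) = c0 * measure lebesgue A"
  proof -
    have "integral {a..b} (\<lambda>x. if x \<in> A then c0 else 0) = integral (A \<inter> {a..b}) (\<lambda>x. c0)"
      by (rule integral_restrict_Int)
    also have "A \<inter> {a..b} = A" by (auto simp: A_def)
    also have "integral A (\<lambda>x. c0) = c0 * integral A (\<lambda>x. 1)"
      using integral_mult_right[of A c0 "\<lambda>x. 1::real"] by simp
    also have "integral A (\<lambda>x. 1::real) = measure lebesgue A" using lmeasure_integral[OF Al] by simp
    finally show ?thesis .
  qed
  have intA: "(\<lambda>x. if x \<in> A then c0 else 0) integrable_on {a..b}"
  proof -
    have "A \<inter> {a..b} = A" by (auto simp: A_def)
    then have "(\<lambda>x. c0) integrable_on (A \<inter> {a..b})" using integrable_on_const[OF Al] by simp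
    then show ?thesis by (subst integrable_restrict_Int)
  qed
  have "integral {a..b} (\<lambda>x. if x \<in> A then c0 else 0) \<le> integral {a..b} (\<lambda>x. \<phi> (f x))"
    by (rule integral_le[OF intA int_comp[OF phi]]) (auto simp: A_def nn big)
  moreover have "c0 * measure lebesgue A > 0" using mpos c0 by simp
  ultimately show ?thesis using eqA by linarith
qed

end

locale thm_full = thm_setting a b f for a b f +
  fixes d :: "nat \<Rightarrow> nat" and lam :: "nat \<Rightarrow> nat \<Rightarrow> real"
  assumes d_inf: "filterlim d at_top sequentially"
    and distr: "has_asymptotic_distribution d lam a b f"
    and range: "\<forall>n. \<forall>i\<in>{1..d n}. lam i n \<in> f ` {a..b}"
begin

definition "L \<phi> = (1/(b-a)) * integral {a..b} (\<lambda>x. \<phi> (f x))"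
definition "csupp (\<phi>::real\<Rightarrow>real) \<longleftrightarrow> continuous_on UNIV \<phi> \<and> bounded {u. \<phi> u \<noteq> 0}"
definition "avg U n \<phi> = (1 / real (d n)) * (\<Sum>j\<in>{1..d n}. \<phi> (U j n))"

lemma conv_lam:
  assumes "csupp \<phi>"
  shows "(\<lambda>n. avg lam n \<phi>) \<longlonglongrightarrow> L \<phi>"
proof -
  have phic: "continuous_on UNIV \<phi>" and phib: "bounded {u. \<phi> u \<noteq> 0}" using assms by (auto simp: csupp_def)
  define F where "F z = complex_of_real (\<phi> (Re z) * max 0 (1 - \<bar>Im z\<bar>))" for z
  have Fc: "continuous_on UNIV F" unfolding F_def
    by (intro continuous_intros continuous_on_compose2[OF phic]) auto
  obtain R where R: "\<And>u. \<phi> u \<noteq> 0 \<Longrightarrow> \<bar>u\<bar> \<le> R" using phib unfolding bounded_iff by auto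
  have Fb: "bounded {z. F z \<noteq> 0}"
    unfolding bounded_iff
  proof (intro exI[of _ "R + 1"] ballI)
    fix z assume "z \<in> {z. F z \<noteq> 0}"
    then have "\<phi> (Re z) \<noteq> 0" "\<bar>Im z\<bar> < 1" unfolding F_def by (auto simp: max_def split: if_splits)
    then have "\<bar>Re z\<bar> \<le> R" "\<bar>Im z\<bar> \<le> 1" using R by auto
    then show "norm z \<le> R + 1" using cmod_le[of z] by linarith
  qed
  have Fr: "F (complex_of_real u) = complex_of_real (\<phi> u)" for u unfolding F_def by simp
  have "(\<lambda>n. (1 / of_nat (d n)) * (\<Sum>i=1..d n. F (complex_of_real (lam i n))))
          \<longlonglongrightarrow> (1 / complex_of_real (b - a)) * integral {a..b} (\<lambda>x. F (complex_of_real (f x)))"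
    using distr Fc Fb unfolding has_asymptotic_distribution_def by blast
  moreover have "integral {a..b} (\<lambda>x. F (complex_of_real (f x))) = complex_of_real (integral {a..b} (\<lambda>x. \<phi> (f x)))"
    unfolding Fr
    by (rule integral_unique[OF has_integral_of_real[OF integrable_integral[OF int_comp[OF phic]]]])
  ultimately have "(\<lambda>n. complex_of_real (avg lam n \<phi>)) \<longlonglongrightarrow> complex_of_real (L \<phi>)"
    unfolding Fr avg_def L_def by simp
  then show ?thesis by (simp only: tendsto_of_real_iff)
qed

lemma conv_grid:
  assumes "csupp \<phi>"
  shows "(\<lambda>n. avg (\<lambda>i n. f (a + real i * (b - a) / real (d n))) n \<phi>) \<longlonglongrightarrow> L \<phi>"
proof -
  have phic: "continuous_on UNIV \<phi>" using assms by (auto simp: csupp_def)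
  obtain B where B: "\<And>x. x \<in> {a..b} \<Longrightarrow> \<bar>\<phi> (f x)\<bar> \<le> B" using bnd_comp[OF phic] by blast
  show ?thesis unfolding avg_def L_def
    by (rule riemann_sum[OF ab int_comp[OF phic] B cont_comp[OF phic] finP d_inf])
qed

lemma ev_dpos: "eventually (\<lambda>n. d n > 0) sequentially"
proof -
  have "eventually (\<lambda>n. 1 \<le> d n) sequentially" using d_inf unfolding filterlim_at_top by blast
  then show ?thesis by (rule eventually_mono) simp
qed

lemma card_sum: "real (card {j\<in>A. Q j}) = (\<Sum>j\<in>A. if Q j then 1 else 0)" if "finite A"
proof -
  have "(\<Sum>j\<in>A. if Q j then 1 else (0::real)) = (\<Sum>j\<in>A. of_bool (Q j))" by (simp add: of_bool_def)
  also have "\<dots> = real (card (A \<inter> {x. Q x}))" using that by simp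
  also have "A \<inter> {x. Q x} = {j\<in>A. Q j}" by auto
  finally show ?thesis by simp
qed

lemma clamp_nz: "max 0 (min 1 t) \<noteq> (0::real) \<Longrightarrow> t > 0"
  by (auto simp: max_def min_def split: if_splits)

lemma pair_cmp:
  assumes Ur: "\<And>n j. j \<in> {1..d n} \<Longrightarrow> U j n \<in> {m..M}"
    and Vr: "\<And>n j. j \<in> {1..d n} \<Longrightarrow> V j n \<in> {m..M}"
    and cU: "\<And>\<phi>. csupp \<phi> \<Longrightarrow> (\<lambda>n. avg U n \<phi>) \<longlonglongrightarrow> L \<phi>"
    and cV: "\<And>\<phi>. csupp \<phi> \<Longrightarrow> (\<lambda>n. avg V n \<phi>) \<longlonglongrightarrow> L \<phi>"
    and ss: "s < s'"
  shows "eventually (\<lambda>n. card {j\<in>{1..d n}. U j n \<le> s} \<le> card {j\<in>{1..d n}. V j n \<le> s'}) sequentially"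
proof (cases "M \<le> s \<or> s' \<le> m")
  case True
  show ?thesis
  proof (rule always_eventually, rule allI)
    fix n
    show "card {j\<in>{1..d n}. U j n \<le> s} \<le> card {j\<in>{1..d n}. V j n \<le> s'}"
    proof (cases "M \<le> s")
      case True
      have "{j\<in>{1..d n}. V j n \<le> s'} = {1..d n}" using Vr[of _ n] True ss by fastforce
      moreover have "card {j\<in>{1..d n}. U j n \<le> s} \<le> card {1..d n}" by (rule card_mono) auto
      ultimately show ?thesis by simp
    next
      case False
      then have "s' \<le> m" using \<open>M \<le> s \<or> s' \<le> m\<close> by auto
      then have "{j\<in>{1..d n}. U j n \<le> s} = {}" using Ur[of _ n] ss by fastforce
      then show ?thesis by (simp only: card.empty)
    qed
  qed
next
  case False
  define lo where "lo = max s m"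
  define hi where "hi = min s' M"
  have lohi: "lo < hi" using False ss mM unfolding lo_def hi_def by auto
  define z where "z = (lo + hi) / 2"
  define e where "e = (hi - lo) / 4"
  have e0: "e > 0" using lohi unfolding e_def by simp
  have zz: "z - 2*e = lo" "z + 2*e = hi" unfolding z_def e_def by (simp_all add: field_simps)
  have zs: "s \<le> z - 2*e" "z + 2*e \<le> s'" "m \<le> z" "z \<le> M"
    unfolding zz using lohi by (auto simp: lo_def hi_def z_def)
  define \<phi>1 where "\<phi>1 u = max 0 (min 1 ((z - e - u)/e)) * max 0 (min 1 (u - (m - 2)))" for u
  define \<phi>2 where "\<phi>2 u = max 0 (1 - \<bar>u - z\<bar>/e)" for u
  have c1: "csupp \<phi>1" unfolding csupp_def
  proof
    show "continuous_on UNIV \<phi>1" unfolding \<phi>1_def by (intro continuous_intros) (use e0 in auto)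
    have "{u. \<phi>1 u \<noteq> 0} \<subseteq> {m-2..z}"
    proof
      fix u assume "u \<in> {u. \<phi>1 u \<noteq> 0}"
      then have "max 0 (min 1 ((z - e - u)/e)) \<noteq> 0" "max 0 (min 1 (u - (m - 2))) \<noteq> 0" unfolding \<phi>1_def by auto
      then have "(z - e - u)/e > 0" "u - (m - 2) > 0" by (auto dest!: clamp_nz)
      then show "u \<in> {m-2..z}" using e0 by (auto simp: field_simps)
    qed
    then show "bounded {u. \<phi>1 u \<noteq> 0}" by (rule bounded_subset[OF bounded_closed_interval])
  qed
  have c2: "csupp \<phi>2" unfolding csupp_def
  proof
    show "continuous_on UNIV \<phi>2" unfolding \<phi>2_def by (intro continuous_intros) (use e0 in auto)
    have "{u. \<phi>2 u \<noteq> 0} \<subseteq> {z-e..z+e}"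
    proof
      fix u assume "u \<in> {u. \<phi>2 u \<noteq> 0}"
      then have "max 0 (1 - \<bar>u - z\<bar>/e) \<noteq> 0" unfolding \<phi>2_def by auto
      then have "1 - \<bar>u - z\<bar>/e > 0" by (metis max_def order_le_less)
      then show "u \<in> {z-e..z+e}" using e0 by (auto simp: field_simps abs_if split: if_splits)
    qed
    then show "bounded {u. \<phi>2 u \<noteq> 0}" by (rule bounded_subset[OF bounded_closed_interval])
  qed
  have cpos: "L \<phi>2 > 0"
  proof -
    have "integral {a..b} (\<lambda>x. \<phi>2 (f x)) > 0"
    proof (rule pos_int[of z "e/2" \<phi>2 "1/2"])
      show "z \<in> {m..M}" using zs by auto
      show "continuous_on UNIV \<phi>2" using c2 by (simp add: csupp_def)
      show "0 \<le> \<phi>2 u" for u unfolding \<phi>2_def by simp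
      show "1/2 \<le> \<phi>2 u" if "\<bar>u - z\<bar> < e/2" for u
        using that e0 unfolding \<phi>2_def by (auto simp: field_simps)
    qed (use e0 in auto)
    then show ?thesis unfolding L_def using ab by simp
  qed
  define c where "c = L \<phi>2"
  have p1: "(if u \<le> s then 1 else 0) \<le> \<phi>1 u" if "u \<in> {m..M}" for u
  proof (cases "u \<le> s")
    case True
    then have "(z - e - u)/e \<ge> 1" using zs e0 by (auto simp: field_simps)
    moreover have "u - (m - 2) \<ge> 1" using that by auto
    ultimately show ?thesis using True unfolding \<phi>1_def by auto
  next
    case False
    then show ?thesis unfolding \<phi>1_def by auto
  qed
  have p2: "\<phi>1 u + \<phi>2 u \<le> (if u \<le> s' then 1 else 0)" for u
  proof (cases "u \<le> z - e")
    case True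
    then have "\<phi>2 u = 0" unfolding \<phi>2_def using e0 by (auto simp: field_simps max_def)
    moreover have "\<phi>1 u \<le> 1" unfolding \<phi>1_def by (auto simp: mult_le_one)
    moreover have "u \<le> s'" using True zs e0 by auto
    ultimately show ?thesis by auto
  next
    case False
    then have "\<phi>1 u = 0" unfolding \<phi>1_def using e0 by (auto simp: field_simps max_def min_def)
    moreover have "\<phi>2 u \<le> 1" unfolding \<phi>2_def using e0 by auto
    moreover have "\<phi>2 u = 0" if "\<not> u \<le> s'" unfolding \<phi>2_def using that zs e0 by (auto simp: field_simps max_def)
    ultimately show ?thesis by auto
  qed
  have e1: "eventually (\<lambda>n. \<bar>avg U n \<phi>1 - L \<phi>1\<bar> < c/4) sequentially"
    using tendstoD[OF cU[OF c1], of "c/4"] cpos unfolding c_def dist_real_def by simp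
  have e2: "eventually (\<lambda>n. \<bar>avg V n \<phi>1 - L \<phi>1\<bar> < c/4) sequentially"
    using tendstoD[OF cV[OF c1], of "c/4"] cpos unfolding c_def dist_real_def by simp
  have e3: "eventually (\<lambda>n. \<bar>avg V n \<phi>2 - c\<bar> < c/4) sequentially"
    using tendstoD[OF cV[OF c2], of "c/4"] cpos unfolding c_def dist_real_def by simp
  show ?thesis
    using e1 e2 e3 ev_dpos
  proof eventually_elim
    case (elim n)
    have dn: "real (d n) > 0" using elim(4) by simp
    have "real (card {j\<in>{1..d n}. U j n \<le> s}) = (\<Sum>j\<in>{1..d n}. if U j n \<le> s then 1 else 0)"
      by (rule card_sum) simp
    also have "\<dots> \<le> (\<Sum>j\<in>{1..d n}. \<phi>1 (U j n))" by (intro sum_mono p1 Ur)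
    also have "\<dots> = real (d n) * avg U n \<phi>1" unfolding avg_def using dn by simp
    also have "\<dots> < real (d n) * (avg V n \<phi>1 + avg V n \<phi>2)"
    proof (rule mult_strict_left_mono[OF _ dn])
      show "avg U n \<phi>1 < avg V n \<phi>1 + avg V n \<phi>2" using elim(1-3) cpos unfolding c_def by linarith
    qed
    also have "\<dots> = (\<Sum>j\<in>{1..d n}. \<phi>1 (V j n) + \<phi>2 (V j n))"
      unfolding avg_def using dn by (simp add: sum.distrib field_simps)
    also have "\<dots> \<le> (\<Sum>j\<in>{1..d n}. if V j n \<le> s' then 1 else 0)" by (intro sum_mono p2)
    also have "\<dots> = real (card {j\<in>{1..d n}. V j n \<le> s'})" by (rule card_sum[symmetric]) simp
    finally show ?case by simp
  qed
qed

lemma mesh_cmp: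
  assumes Ur: "\<And>n j. j \<in> {1..d n} \<Longrightarrow> U j n \<in> {m..M}"
    and Vr: "\<And>n j. j \<in> {1..d n} \<Longrightarrow> V j n \<in> {m..M}"
    and cU: "\<And>\<phi>. csupp \<phi> \<Longrightarrow> (\<lambda>n. avg U n \<phi>) \<longlonglongrightarrow> L \<phi>"
    and cV: "\<And>\<phi>. csupp \<phi> \<Longrightarrow> (\<lambda>n. avg V n \<phi>) \<longlonglongrightarrow> L \<phi>"
    and \<delta>: "\<delta> > 0"
  shows "eventually (\<lambda>n. \<forall>t. card {j\<in>{1..d n}. U j n \<le> t} \<le> card {j\<in>{1..d n}. V j n \<le> t + \<delta>}) sequentially"
proof -
  define N where "N = nat \<lceil>2*(M-m)/\<delta>\<rceil>"
  define sk where "sk k = m + real k * \<delta>/2" for k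
  have "eventually (\<lambda>n. \<forall>k\<in>{0..N}. card {j\<in>{1..d n}. U j n \<le> sk k} \<le> card {j\<in>{1..d n}. V j n \<le> sk k + \<delta>/2}) sequentially"
    by (rule eventually_ball_finite) (use pair_cmp[OF Ur Vr cU cV] \<delta> in auto)
  then show ?thesis
  proof (rule eventually_mono, intro allI)
    fix n t
    assume H: "\<forall>k\<in>{0..N}. card {j\<in>{1..d n}. U j n \<le> sk k} \<le> card {j\<in>{1..d n}. V j n \<le> sk k + \<delta>/2}"
    show "card {j\<in>{1..d n}. U j n \<le> t} \<le> card {j\<in>{1..d n}. V j n \<le> t + \<delta>}"
    proof (cases "t < m")
      case True
      then have "{j\<in>{1..d n}. U j n \<le> t} = {}" using Ur[of _ n] by fastforce
      then show ?thesis by (simp only: card.empty)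
    next
      case tm: False
      show ?thesis
      proof (cases "M \<le> t")
        case True
        have "{j\<in>{1..d n}. V j n \<le> t + \<delta>} = {1..d n}" using Vr[of _ n] True \<delta> by fastforce
        moreover have "card {j\<in>{1..d n}. U j n \<le> t} \<le> card {1..d n}" by (rule card_mono) auto
        ultimately show ?thesis by simp
      next
        case False
        define q where "q = (t - m)/(\<delta>/2)"
        define k where "k = nat \<lceil>q\<rceil>"
        have q0: "q \<ge> 0" using tm \<delta> unfolding q_def by simp
        have rk: "real k = of_int \<lceil>q\<rceil>" using q0 unfolding k_def by simp
        have k1: "q \<le> real k" "real k < q + 1" unfolding rk by linarith+
        have "sk k \<ge> t" "sk k < t + \<delta>/2"
          using k1 \<delta> unfolding sk_def q_def by (simp_all add: field_simps)
        moreover have "k \<le> N"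
        proof -
          have "q \<le> 2*(M-m)/\<delta>" using False \<delta> unfolding q_def by (simp add: field_simps)
          then have "\<lceil>q\<rceil> \<le> \<lceil>2*(M-m)/\<delta>\<rceil>" by (rule ceiling_mono)
          then show ?thesis unfolding k_def N_def by (rule nat_mono)
        qed
        ultimately have s1: "t \<le> sk k" "sk k + \<delta>/2 \<le> t + \<delta>" and kN: "k \<in> {0..N}" by auto
        have "card {j\<in>{1..d n}. U j n \<le> t} \<le> card {j\<in>{1..d n}. U j n \<le> sk k}"
          by (rule card_mono) (use s1 in auto)
        also have "\<dots> \<le> card {j\<in>{1..d n}. V j n \<le> sk k + \<delta>/2}" using H kN by blast
        also have "\<dots> \<le> card {j\<in>{1..d n}. V j n \<le> t + \<delta>}"
          by (rule card_mono) (use s1 in auto)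
        finally show ?thesis .
      qed
    qed
  qed
qed

end

lemma grid_in:
  fixes a b :: real
  assumes "a < b" "i \<in> {1..D}"
  shows "a + real i * (b - a) / real D \<in> {a..b}"
proof -
  have D: "real D > 0" using assms by auto
  have "real i * (b - a) / real D \<le> real D * (b - a) / real D"
    using assms by (intro divide_right_mono mult_right_mono) auto
  then show ?thesis using D assms by auto
qed

lemma cnt_upper:
  fixes a b p \<eta> :: real
  assumes ab: "a < b" and D: "D > 0" and eta: "\<eta> > 0"
  shows "real (card {i\<in>{1..D}. \<bar>a + real i * (b - a) / real D - p\<bar> < \<eta>}) \<le> 2*\<eta>*real D/(b-a) + 1"
proof -
  define S where "S = {i\<in>{1..D}. \<bar>a + real i * (b - a) / real D - p\<bar> < \<eta>}"
  have fin: "finite S" unfolding S_def by auto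
  show ?thesis
  proof (cases "S = {}")
    case True
    have "0 \<le> 2*\<eta>*real D/(b-a) + 1" using eta ab by simp
    then show ?thesis using True unfolding S_def[symmetric] by simp
  next
    case False
    define i1 where "i1 = Min S"
    define i2 where "i2 = Max S"
    have i1S: "i1 \<in> S" and i2S: "i2 \<in> S" using fin False unfolding i1_def i2_def by auto
    have sub: "S \<subseteq> {i1..i2}" using fin unfolding i1_def i2_def by auto
    have "card S \<le> card {i1..i2}" by (rule card_mono) (use sub in auto)
    also have "card {i1..i2} = i2 + 1 - i1" by simp
    finally have c0: "card S \<le> i2 + 1 - i1" .
    have "i1 \<le> i2" using i1S i2S sub by auto
    then have c: "real (card S) \<le> real i2 + 1 - real i1" using c0 by (simp add: of_nat_diff)
    have "\<bar>a + real i2 * (b - a) / real D - p\<bar> < \<eta>" "\<bar>a + real i1 * (b - a) / real D - p\<bar> < \<eta>"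
      using i1S i2S unfolding S_def by auto
    then have "real i2 * (b - a) / real D - real i1 * (b - a) / real D < 2*\<eta>" by (simp add: abs_less_iff)
    then have "(real i2 - real i1) * (b - a) / real D < 2*\<eta>" by (simp add: diff_divide_distrib left_diff_distrib)
    then have "real i2 - real i1 < 2*\<eta>*real D/(b-a)" using ab D by (simp add: field_simps)
    then show ?thesis using c unfolding S_def by linarith
  qed
qed

lemma cnt_lower:
  fixes a b s s' :: real
  assumes ab: "a < b" and D: "D > 0" and s: "a \<le> s" "s \<le> s'" "s' \<le> b"
  shows "real (card {i\<in>{1..D}. s < a + real i * (b - a) / real D \<and> a + real i * (b - a) / real D \<le> s'})
           \<ge> (s' - s) * real D / (b - a) - 1"
proof -
  define \<alpha> where "\<alpha> = (s - a) * real D / (b - a)"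
  define \<alpha>' where "\<alpha>' = (s' - a) * real D / (b - a)"
  have Dp: "real D > 0" using D by simp
  have al: "0 \<le> \<alpha>" "\<alpha> \<le> \<alpha>'" "\<alpha>' \<le> real D"
  proof -
    show "0 \<le> \<alpha>" unfolding \<alpha>_def using ab s Dp by simp
    show "\<alpha> \<le> \<alpha>'" unfolding \<alpha>_def \<alpha>'_def using ab s Dp
      by (intro divide_right_mono mult_right_mono) auto
    have "(s' - a) * real D / (b - a) \<le> (b - a) * real D / (b - a)"
      using ab s Dp by (intro divide_right_mono mult_right_mono) auto
    then show "\<alpha>' \<le> real D" unfolding \<alpha>'_def using ab by simp
  qed
  have iff1: "s < a + real i * (b - a) / real D \<longleftrightarrow> \<alpha> < real i" for i
    unfolding \<alpha>_def using ab Dp by (simp add: field_simps)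
  have iff2: "a + real i * (b - a) / real D \<le> s' \<longleftrightarrow> real i \<le> \<alpha>'" for i
    unfolding \<alpha>'_def using ab Dp by (simp add: field_simps)
  define lo where "lo = nat \<lfloor>\<alpha>\<rfloor> + 1"
  define hi where "hi = nat \<lfloor>\<alpha>'\<rfloor>"
  have "{lo..hi} \<subseteq> {i\<in>{1..D}. s < a + real i * (b - a) / real D \<and> a + real i * (b - a) / real D \<le> s'}"
  proof
    fix i assume i: "i \<in> {lo..hi}"
    have "real i \<ge> real lo" "real i \<le> real hi" using i by auto
    moreover have "real lo > \<alpha>" unfolding lo_def using al by linarith
    moreover have "real hi \<le> \<alpha>'" unfolding hi_def using al by linarith
    ultimately have "\<alpha> < real i" "real i \<le> \<alpha>'" by auto
    moreover have "i \<ge> 1" using i unfolding lo_def by auto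
    moreover have "i \<le> D" using \<open>real i \<le> \<alpha>'\<close> al by linarith
    ultimately show "i \<in> {i\<in>{1..D}. s < a + real i * (b - a) / real D \<and> a + real i * (b - a) / real D \<le> s'}"
      unfolding iff1 iff2 by auto
  qed
  then have "card {lo..hi} \<le> card {i\<in>{1..D}. s < a + real i * (b - a) / real D \<and> a + real i * (b - a) / real D \<le> s'}"
    by (rule card_mono[rotated]) auto
  moreover have "real (card {lo..hi}) \<ge> \<alpha>' - \<alpha> - 1"
  proof -
    have "card {lo..hi} = hi + 1 - lo" by simp
    moreover have "real hi \<ge> \<alpha>' - 1" unfolding hi_def using al by linarith
    moreover have "real lo \<le> \<alpha> + 1" unfolding lo_def using al by linarith
    ultimately show ?thesis by linarith
  qed
  moreover have "\<alpha>' - \<alpha> = (s' - s) * real D / (b - a)" unfolding \<alpha>_def \<alpha>'_def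
    by (simp add: diff_divide_distrib[symmetric] algebra_simps)
  ultimately show ?thesis by linarith
qed

lemma pos_match:
  fixes a b \<epsilon> NB :: real and \<xi> :: "nat \<Rightarrow> real" and D :: nat
  defines "Y \<equiv> \<lambda>i. a + real i * (b - a) / real D"
  assumes ab: "a < b" and D: "D > 0" and e: "\<epsilon> > 0"
    and xi: "\<And>i. i \<in> {1..D} \<Longrightarrow> \<xi> i \<in> {a..b}"
    and Bad: "Bad \<subseteq> {1..D}" "real (card Bad) \<le> NB"
    and good: "\<And>i. i \<in> {1..D} - Bad \<Longrightarrow> \<bar>\<xi> i - Y i\<bar> \<le> \<epsilon>/2"
    and big: "(\<epsilon>/2) * real D / (b - a) - 1 \<ge> 2 * NB"
  shows "card {i\<in>{1..D}. \<xi> i \<le> t} \<le> card {i\<in>{1..D}. Y i \<le> t + \<epsilon>}"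
    and "card {i\<in>{1..D}. Y i \<le> t} \<le> card {i\<in>{1..D}. \<xi> i \<le> t + \<epsilon>}"
proof -
  have Yin: "Y i \<in> {a..b}" if "i \<in> {1..D}" for i using grid_in[OF ab that] unfolding Y_def .
  have NB0: "NB \<ge> 0" using Bad(2) by (meson of_nat_0_le_iff order_trans)
  have finB: "finite Bad" using Bad(1) finite_subset by blast
  show "card {i\<in>{1..D}. \<xi> i \<le> t} \<le> card {i\<in>{1..D}. Y i \<le> t + \<epsilon>}"
  proof (cases "b \<le> t + \<epsilon>")
    case True
    then have "{i\<in>{1..D}. Y i \<le> t + \<epsilon>} = {1..D}" using Yin by fastforce
    moreover have "card {i\<in>{1..D}. \<xi> i \<le> t} \<le> card {1..D}" by (rule card_mono) auto
    ultimately show ?thesis by simp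
  next
    case tb: False
    show ?thesis
    proof (cases "t < a")
      case True
      then have "{i\<in>{1..D}. \<xi> i \<le> t} = {}" using xi by fastforce
      then show ?thesis by (simp only: card.empty)
    next
      case False
      define A1 where "A1 = {i\<in>{1..D}. Y i \<le> t + \<epsilon>/2}"
      define A2 where "A2 = {i\<in>{1..D}. t + \<epsilon>/2 < Y i \<and> Y i \<le> t + \<epsilon>}"
      have "{i\<in>{1..D}. \<xi> i \<le> t} \<subseteq> A1 \<union> Bad"
      proof
        fix i assume i: "i \<in> {i\<in>{1..D}. \<xi> i \<le> t}"
        show "i \<in> A1 \<union> Bad"
        proof (cases "i \<in> Bad")
          case False
          then have "\<bar>\<xi> i - Y i\<bar> \<le> \<epsilon>/2" using good i by auto
          moreover have "\<xi> i \<le> t" using i by simp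
          ultimately have "Y i \<le> t + \<epsilon>/2" by linarith
          then show ?thesis using i unfolding A1_def by auto
        qed simp
      qed
      then have "card {i\<in>{1..D}. \<xi> i \<le> t} \<le> card (A1 \<union> Bad)"
        by (rule card_mono[OF finite_UnI[OF _ finB], rotated]) (simp add: A1_def)
      then have l1: "card {i\<in>{1..D}. \<xi> i \<le> t} \<le> card A1 + card Bad"
        using card_Un_le[of A1 Bad] by linarith
      have "A1 \<union> A2 \<subseteq> {i\<in>{1..D}. Y i \<le> t + \<epsilon>}" unfolding A1_def A2_def using e by auto
      moreover have "card (A1 \<union> A2) = card A1 + card A2"
        by (rule card_Un_disjoint) (auto simp: A1_def A2_def)
      moreover have "card (A1 \<union> A2) \<le> card {i\<in>{1..D}. Y i \<le> t + \<epsilon>}"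
        by (rule card_mono[OF _ calculation(1)]) simp
      ultimately have l2: "card A1 + card A2 \<le> card {i\<in>{1..D}. Y i \<le> t + \<epsilon>}"
        by simp
      have "real (card A2) \<ge> (t + \<epsilon> - (t + \<epsilon>/2)) * real D / (b - a) - 1"
        unfolding A2_def Y_def by (rule cnt_lower[OF ab D]) (use False tb e in auto)
      then have "real (card A2) \<ge> real (card Bad)" using big Bad(2) NB0 by (simp add: field_simps)
      then show ?thesis using l1 l2 by linarith
    qed
  qed
  show "card {i\<in>{1..D}. Y i \<le> t} \<le> card {i\<in>{1..D}. \<xi> i \<le> t + \<epsilon>}"
  proof (cases "b \<le> t + \<epsilon>")
    case True
    then have "{i\<in>{1..D}. \<xi> i \<le> t + \<epsilon>} = {1..D}" using xi by fastforce
    moreover have "card {i\<in>{1..D}. Y i \<le> t} \<le> card {1..D}" by (rule card_mono) auto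
    ultimately show ?thesis by simp
  next
    case tb: False
    show ?thesis
    proof (cases "t < a")
      case True
      then have "{i\<in>{1..D}. Y i \<le> t} = {}" using Yin by fastforce
      then show ?thesis by (simp only: card.empty)
    next
      case False
      define G1 where "G1 = {i\<in>{1..D} - Bad. Y i \<le> t}"
      define G2 where "G2 = {i\<in>{1..D} - Bad. t < Y i \<and> Y i \<le> t + \<epsilon>/2}"
      define A3 where "A3 = {i\<in>{1..D}. t < Y i \<and> Y i \<le> t + \<epsilon>/2}"
      have "{i\<in>{1..D}. Y i \<le> t} \<subseteq> G1 \<union> Bad" unfolding G1_def by auto
      then have "card {i\<in>{1..D}. Y i \<le> t} \<le> card (G1 \<union> Bad)"
        by (rule card_mono[OF finite_UnI[OF _ finB], rotated]) (simp add: G1_def)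
      then have l1: "card {i\<in>{1..D}. Y i \<le> t} \<le> card G1 + card Bad"
        using card_Un_le[of G1 Bad] by linarith
      have "G1 \<union> G2 \<subseteq> {i\<in>{1..D}. \<xi> i \<le> t + \<epsilon>}"
      proof
        fix i assume i: "i \<in> G1 \<union> G2"
        then have "\<bar>\<xi> i - Y i\<bar> \<le> \<epsilon>/2" "Y i \<le> t + \<epsilon>/2" "i \<in> {1..D}"
          using good e unfolding G1_def G2_def by auto
        then have "\<xi> i \<le> t + \<epsilon>" by linarith
        then show "i \<in> {i\<in>{1..D}. \<xi> i \<le> t + \<epsilon>}" using \<open>i \<in> {1..D}\<close> by simp
      qed
      moreover have "card (G1 \<union> G2) = card G1 + card G2"
        by (rule card_Un_disjoint) (auto simp: G1_def G2_def)
      moreover have "card (G1 \<union> G2) \<le> card {i\<in>{1..D}. \<xi> i \<le> t + \<epsilon>}"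
        by (rule card_mono[OF _ calculation(1)]) simp
      ultimately have l2: "card G1 + card G2 \<le> card {i\<in>{1..D}. \<xi> i \<le> t + \<epsilon>}"
        by simp
      have "A3 \<subseteq> G2 \<union> Bad" unfolding A3_def G2_def by auto
      then have "card A3 \<le> card (G2 \<union> Bad)"
        by (rule card_mono[OF finite_UnI[OF _ finB], rotated]) (simp add: G2_def)
      then have l3: "card A3 \<le> card G2 + card Bad"
        using card_Un_le[of G2 Bad] by linarith
      have "real (card A3) \<ge> (t + \<epsilon>/2 - t) * real D / (b - a) - 1"
        unfolding A3_def Y_def by (rule cnt_lower[OF ab D]) (use False tb e in auto)
      then have "real (card A3) \<ge> 2 * real (card Bad)" using big Bad(2) NB0 by (simp add: field_simps)
      then show ?thesis using l1 l2 l3 by linarith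
    qed
  qed
qed

context thm_full
begin

lemma lam_range: "j \<in> {1..d n} \<Longrightarrow> lam j n \<in> {m..M}"
proof -
  assume j: "j \<in> {1..d n}"
  then have "lam j n \<in> f ` {a..b}" using range by blast
  then obtain x where x: "x \<in> {a..b}" "lam j n = f x" by blast
  show "lam j n \<in> {m..M}" using fm[OF x(1)] x(2) by simp
qed

lemma grid_range: "j \<in> {1..d n} \<Longrightarrow> f (a + real j * (b - a) / real (d n)) \<in> {m..M}"
  using grid_in[OF ab] fm by auto

lemma eps_level:
  assumes e: "\<epsilon> > 0"
  shows "eventually (\<lambda>n. \<exists>x. ((\<forall>i\<in>{1..d n}. x i \<in> {a..b}) \<and>
            (\<exists>\<tau>. \<tau> permutes {1..d n} \<and> (\<forall>i\<in>{1..d n}. lam (\<tau> i) n = f (x i)))) \<and>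
            (\<forall>i\<in>{1..d n}. \<bar>x i - (a + real i * (b - a) / real (d n))\<bar> \<le> \<epsilon>)) sequentially"
proof -
  define cP where "cP = real (card P)"
  define \<eta> where "\<eta> = \<epsilon> / (32 * (cP + 1))"
  define e' where "e' = \<eta> / 2"
  have cP0: "cP \<ge> 0" unfolding cP_def by simp
  have eta0: "\<eta> > 0" unfolding \<eta>_def using e cP0 by simp
  have e'0: "0 < e'" "e' < \<eta>" unfolding e'_def using eta0 by auto
  have e'e: "e' \<le> \<epsilon>/2"
  proof -
    have "\<eta> \<le> \<epsilon>" unfolding \<eta>_def using e cP0 by (simp add: field_simps)
    then show ?thesis unfolding e'_def by simp
  qed
  obtain \<rho> where \<rho>: "\<rho> > 0" and good_pt: "\<And>y w. y \<in> {a..b} \<Longrightarrow> (\<forall>p\<in>P. \<eta> \<le> \<bar>y - p\<bar>) \<Longrightarrow>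
      \<bar>w - f y\<bar> \<le> \<rho> \<Longrightarrow> (\<exists>x\<in>{a..b}. \<bar>x - y\<bar> \<le> e' \<and> f x = w)"
    using good[OF e'0] by blast
  define G where "G i n = f (a + real i * (b - a) / real (d n))" for i n
  have Gr: "\<And>n j. j \<in> {1..d n} \<Longrightarrow> G j n \<in> {m..M}" using grid_range unfolding G_def .
  have cG: "\<And>\<phi>. csupp \<phi> \<Longrightarrow> (\<lambda>n. avg G n \<phi>) \<longlonglongrightarrow> L \<phi>" using conv_grid unfolding G_def .
  have E1: "eventually (\<lambda>n. \<forall>t. card {j\<in>{1..d n}. lam j n \<le> t} \<le> card {j\<in>{1..d n}. G j n \<le> t + \<rho>}) sequentially"
    by (rule mesh_cmp[OF lam_range Gr conv_lam cG \<rho>])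
  have E2: "eventually (\<lambda>n. \<forall>t. card {j\<in>{1..d n}. G j n \<le> t} \<le> card {j\<in>{1..d n}. lam j n \<le> t + \<rho>}) sequentially"
    by (rule mesh_cmp[OF Gr lam_range cG conv_lam \<rho>])
  define Z where "Z = nat \<lceil>(1 + 2*cP) * (b - a) / (3*\<epsilon>/8)\<rceil> + 1"
  have E3: "eventually (\<lambda>n. Z \<le> d n) sequentially" using d_inf unfolding filterlim_at_top by blast
  show ?thesis using E1 E2 E3
  proof eventually_elim
    case (elim n)
    define D where "D = d n"
    define y where "y i = a + real i * (b - a) / real D" for i
    have D0: "D > 0" using elim(3) unfolding D_def Z_def by simp
    have Dbig: "real D \<ge> (1 + 2*cP) * (b - a) / (3*\<epsilon>/8)"
    proof -
      have "real D \<ge> real Z" using elim(3) unfolding D_def by simp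
      moreover have "real Z \<ge> (1 + 2*cP) * (b - a) / (3*\<epsilon>/8)" unfolding Z_def by linarith
      ultimately show ?thesis by linarith
    qed
    obtain \<sigma>1 where \<sigma>1: "bij_betw \<sigma>1 {1..D} {1..D}" "\<And>i. i \<in> {1..D} \<Longrightarrow> \<bar>lam (\<sigma>1 i) n - f (y i)\<bar> \<le> \<rho>"
      using match_lemma[of "{1..D}" "{1..D}" "\<lambda>j. lam j n" "\<lambda>i. f (y i)" \<rho>] elim(1,2)
      unfolding D_def y_def G_def by auto
    have s1in: "\<sigma>1 i \<in> {1..D}" if "i \<in> {1..D}" for i using \<sigma>1(1) that by (auto simp: bij_betw_def)
    define Bad where "Bad = {i\<in>{1..D}. \<exists>p\<in>P. \<bar>y i - p\<bar> < \<eta>}"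
    define \<xi> where "\<xi> i = (if i \<in> Bad then (SOME x. x \<in> {a..b} \<and> f x = lam (\<sigma>1 i) n)
                           else (SOME x. x \<in> {a..b} \<and> \<bar>x - y i\<bar> \<le> e' \<and> f x = lam (\<sigma>1 i) n))" for i
    have yin: "y i \<in> {a..b}" if "i \<in> {1..D}" for i using grid_in[OF ab that] unfolding y_def .
    have xi: "\<xi> i \<in> {a..b} \<and> f (\<xi> i) = lam (\<sigma>1 i) n \<and> (i \<notin> Bad \<longrightarrow> \<bar>\<xi> i - y i\<bar> \<le> e')"
      if i: "i \<in> {1..D}" for i
    proof (cases "i \<in> Bad")
      case True
      have "\<exists>x. x \<in> {a..b} \<and> f x = lam (\<sigma>1 i) n" using range s1in[OF i] unfolding D_def by force
      from someI_ex[OF this] show ?thesis using True unfolding \<xi>_def by simp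
    next
      case False
      then have "\<forall>p\<in>P. \<eta> \<le> \<bar>y i - p\<bar>" using i unfolding Bad_def by auto
      then have "\<exists>x. x \<in> {a..b} \<and> \<bar>x - y i\<bar> \<le> e' \<and> f x = lam (\<sigma>1 i) n"
      proof -
        obtain x where "x \<in> {a..b}" "\<bar>x - y i\<bar> \<le> e'" "f x = lam (\<sigma>1 i) n"
          using good_pt[OF yin[OF i] \<open>\<forall>p\<in>P. \<eta> \<le> \<bar>y i - p\<bar>\<close> \<sigma>1(2)[OF i]] by blast
        then show ?thesis by blast
      qed
      from someI_ex[OF this] show ?thesis using False unfolding \<xi>_def by simp
    qed
    define NB where "NB = cP * (2*\<eta>*real D/(b-a) + 1)"
    have cardBad: "real (card Bad) \<le> NB"
    proof -
      have "Bad \<subseteq> (\<Union>p\<in>P. {i\<in>{1..D}. \<bar>y i - p\<bar> < \<eta>})" unfolding Bad_def by auto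
      then have "card Bad \<le> card (\<Union>p\<in>P. {i\<in>{1..D}. \<bar>y i - p\<bar> < \<eta>})"
        by (rule card_mono[rotated]) (use finP in auto)
      also have "\<dots> \<le> (\<Sum>p\<in>P. card {i\<in>{1..D}. \<bar>y i - p\<bar> < \<eta>})" by (rule card_UN_le[OF finP])
      finally have "real (card Bad) \<le> real (\<Sum>p\<in>P. card {i\<in>{1..D}. \<bar>y i - p\<bar> < \<eta>})"
        by (simp only: of_nat_le_iff)
      also have "\<dots> = (\<Sum>p\<in>P. real (card {i\<in>{1..D}. \<bar>y i - p\<bar> < \<eta>}))" by (rule of_nat_sum)
      also have "\<dots> \<le> (\<Sum>p\<in>P. 2*\<eta>*real D/(b-a) + 1)"
        by (intro sum_mono) (unfold y_def, rule cnt_upper[OF ab D0 eta0])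
      also have "\<dots> = NB" unfolding NB_def cP_def by simp
      finally show ?thesis .
    qed
    have big: "(\<epsilon>/2) * real D / (b - a) - 1 \<ge> 2 * NB"
    proof -
      have ba: "b - a > 0" using ab by simp
      have "4 * \<eta> * cP \<le> \<epsilon>/8"
      proof -
        have "4 * \<eta> * cP = \<epsilon> * cP / (8 * (cP + 1))" unfolding \<eta>_def using cP0 by (simp add: field_simps)
        also have "\<dots> \<le> \<epsilon> / 8" using cP0 e by (simp add: field_simps)
        finally show ?thesis .
      qed
      define q where "q = real D / (b - a)"
      have q0: "q \<ge> 0" unfolding q_def using ba by simp
      have h1: "4 * \<eta> * cP * q \<le> (\<epsilon>/8) * q" using \<open>4 * \<eta> * cP \<le> \<epsilon>/8\<close> q0 by (rule mult_right_mono)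
      have h2: "(3*\<epsilon>/8) * q \<ge> 1 + 2*cP" unfolding q_def using Dbig ba e by (simp add: field_simps)
      have "(\<epsilon>/2) * real D / (b - a) = (\<epsilon>/2) * q" unfolding q_def by simp
      moreover have "2 * NB = 4 * \<eta> * cP * q + 2 * cP" unfolding NB_def q_def by (simp add: field_simps)
      ultimately show ?thesis using h1 h2 by (simp add: algebra_simps)
    qed
    have Bsub: "Bad \<subseteq> {1..D}" unfolding Bad_def by auto
    have goodxi: "\<bar>\<xi> i - y i\<bar> \<le> \<epsilon>/2" if "i \<in> {1..D} - Bad" for i
      using xi[of i] that e'e by auto
    have pm1: "card {i\<in>{1..D}. \<xi> i \<le> t} \<le> card {i\<in>{1..D}. y i \<le> t + \<epsilon>}" for t
      using pos_match(1)[OF ab D0 e _ Bsub cardBad _ big, of \<xi> t] xi goodxi unfolding y_def by blast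
    have pm2: "card {i\<in>{1..D}. y i \<le> t} \<le> card {i\<in>{1..D}. \<xi> i \<le> t + \<epsilon>}" for t
      using pos_match(2)[OF ab D0 e _ Bsub cardBad _ big, of \<xi> t] xi goodxi unfolding y_def by blast
    obtain \<sigma>2 where \<sigma>2: "bij_betw \<sigma>2 {1..D} {1..D}" "\<And>i. i \<in> {1..D} \<Longrightarrow> \<bar>\<xi> (\<sigma>2 i) - y i\<bar> \<le> \<epsilon>"
      using match_lemma[of "{1..D}" "{1..D}" \<xi> y \<epsilon>] pm1 pm2 by auto
    have s2in: "\<sigma>2 i \<in> {1..D}" if "i \<in> {1..D}" for i using \<sigma>2(1) that by (auto simp: bij_betw_def)
    define x where "x i = \<xi> (\<sigma>2 i)" for i
    define \<tau> where "\<tau> i = (if i \<in> {1..D} then \<sigma>1 (\<sigma>2 i) else i)" for i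
    have "bij_betw (\<sigma>1 \<circ> \<sigma>2) {1..D} {1..D}" by (rule bij_betw_trans[OF \<sigma>2(1) \<sigma>1(1)])
    then have "bij_betw \<tau> {1..D} {1..D}" by (rule bij_betw_cong[THEN iffD1, rotated]) (auto simp: \<tau>_def)
    then have perm: "\<tau> permutes {1..D}" by (rule bij_imp_permutes) (auto simp: \<tau>_def)
    have "(\<forall>i\<in>{1..d n}. x i \<in> {a..b}) \<and>
            (\<exists>\<tau>. \<tau> permutes {1..d n} \<and> (\<forall>i\<in>{1..d n}. lam (\<tau> i) n = f (x i))) \<and>
            (\<forall>i\<in>{1..d n}. \<bar>x i - (a + real i * (b - a) / real (d n))\<bar> \<le> \<epsilon>)"
    proof (intro conjI ballI exI[of _ \<tau>])
      fix i assume i: "i \<in> {1..d n}"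
      then have i': "i \<in> {1..D}" unfolding D_def .
      show "x i \<in> {a..b}" using xi[OF s2in[OF i']] unfolding x_def by auto
      show "lam (\<tau> i) n = f (x i)" using xi[OF s2in[OF i']] i' unfolding x_def \<tau>_def by auto
      show "\<bar>x i - (a + real i * (b - a) / real (d n))\<bar> \<le> \<epsilon>" using \<sigma>2(2)[OF i'] unfolding x_def y_def D_def .
    next
      show "\<tau> permutes {1..d n}" using perm unfolding D_def .
    qed
    then show ?case by blast
  qed
qed

end

context thm_full
begin

lemma main_result:
  shows "\<exists>x :: nat \<Rightarrow> nat \<Rightarrow> real.
           asymptotically_uniform_grid d x a b \<and>
           (\<forall>n. \<forall>i\<in>{1..d n}. x i n \<in> {a..b}) \<and>
           (\<forall>n. \<exists>\<tau>. \<tau> permutes {1..d n} \<and> (\<forall>i\<in>{1..d n}. lam (\<tau> i) n = f (x i n)))"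
proof -
  define Q where "Q n x = ((\<forall>i\<in>{1..d n}. x i \<in> {a..b}) \<and>
      (\<exists>\<tau>. \<tau> permutes {1..d n} \<and> (\<forall>i\<in>{1..d n}. lam (\<tau> i) n = f (x i))))" for n and x :: "nat \<Rightarrow> real"
  define g where "g n x = Max (insert 0 ((\<lambda>i. \<bar>x i - (a + real i * (b - a) / real (d n))\<bar>) ` {1..d n}))"
    for n and x :: "nat \<Rightarrow> real"
  have ex: "\<exists>x. Q n x" for n
  proof -
    define x where "x i = (SOME z. z \<in> {a..b} \<and> f z = lam i n)" for i
    have "x i \<in> {a..b} \<and> f (x i) = lam i n" if "i \<in> {1..d n}" for i
    proof -
      have "\<exists>z. z \<in> {a..b} \<and> f z = lam i n" using range that by force
      from someI_ex[OF this] show ?thesis unfolding x_def .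
    qed
    then have "Q n x" unfolding Q_def
      by (intro conjI ballI exI[of _ id]) (simp_all add: permutes_id)
    then show ?thesis by blast
  qed
  have nn: "0 \<le> g n x" for n x unfolding g_def by (rule Max_ge) auto
  have ev: "eventually (\<lambda>n. \<exists>x. Q n x \<and> g n x \<le> \<epsilon>) sequentially" if e: "\<epsilon> > 0" for \<epsilon>
    using eps_level[OF e]
  proof (rule eventually_mono)
    fix n assume "\<exists>x. ((\<forall>i\<in>{1..d n}. x i \<in> {a..b}) \<and>
            (\<exists>\<tau>. \<tau> permutes {1..d n} \<and> (\<forall>i\<in>{1..d n}. lam (\<tau> i) n = f (x i)))) \<and>
            (\<forall>i\<in>{1..d n}. \<bar>x i - (a + real i * (b - a) / real (d n))\<bar> \<le> \<epsilon>)"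
    then obtain x where x: "Q n x" "\<forall>i\<in>{1..d n}. \<bar>x i - (a + real i * (b - a) / real (d n))\<bar> \<le> \<epsilon>"
      unfolding Q_def by blast
    have "g n x \<le> \<epsilon>" unfolding g_def
      by (subst Max_le_iff) (simp_all add: less_imp_le[OF e] x(2))
    then show "\<exists>x. Q n x \<and> g n x \<le> \<epsilon>" using x(1) by blast
  qed
  have "\<exists>X. (\<forall>n. Q n (X n)) \<and> (\<lambda>n. g n (X n)) \<longlonglongrightarrow> 0"
    by (rule diag_lemma[of Q g, OF ex nn ev])
  then obtain X where X: "\<And>n. Q n (X n)" "(\<lambda>n. g n (X n)) \<longlonglongrightarrow> 0" by blast
  have lim: "(\<lambda>n. Max ((\<lambda>i. \<bar>X n i - (a + real i * (b - a) / real (d n))\<bar>) ` {1..d n})) \<longlonglongrightarrow> 0"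
  proof -
    have "eventually (\<lambda>n. g n (X n) = Max ((\<lambda>i. \<bar>X n i - (a + real i * (b - a) / real (d n))\<bar>) ` {1..d n})) sequentially"
      using ev_dpos
    proof (rule eventually_mono)
      fix n assume dn: "d n > 0"
      define S where "S = (\<lambda>i. \<bar>X n i - (a + real i * (b - a) / real (d n))\<bar>) ` {1..d n}"
      have Sne: "S \<noteq> {}" "finite S" unfolding S_def using dn by auto
      have "Max S \<in> S" using Sne by (rule Max_in[rotated])
      then have "Max S \<ge> 0" unfolding S_def by auto
      then have "Max (insert 0 S) = Max S" using Sne by (simp add: max_def)
      then show "g n (X n) = Max ((\<lambda>i. \<bar>X n i - (a + real i * (b - a) / real (d n))\<bar>) ` {1..d n})"
        unfolding g_def S_def by simp
    qed
    from tendsto_cong[OF this] X(2) show ?thesis by (simp only:)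
  qed
  show ?thesis
  proof (intro exI[of _ "\<lambda>i n. X n i"] conjI allI ballI)
    show "asymptotically_uniform_grid d (\<lambda>i n. X n i) a b"
      unfolding asymptotically_uniform_grid_def using d_inf lim by simp
    fix n
    show "\<exists>\<tau>. \<tau> permutes {1..d n} \<and> (\<forall>i\<in>{1..d n}. lam (\<tau> i) n = f (X n i))"
      using X(1)[of n] unfolding Q_def by blast
    fix i assume "i \<in> {1..d n}"
    then show "X n i \<in> {a..b}" using X(1)[of n] unfolding Q_def by blast
  qed
qed

end

theorem theorem2p6:
  fixes a b :: real and f :: "real \<Rightarrow> real"
    and d :: "nat \<Rightarrow> nat" and lam :: "nat \<Rightarrow> nat \<Rightarrow> real"
  assumes ab: "a < b"
    and bdd: "bounded (f ` {a..b})"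
    and fin_max: "finite {x. local_max_point a b f x}"
    and fin_min: "finite {x. local_min_point a b f x}"
    and fin_disc: "finite {x. discontinuity_point a b f x}"
    and ER: "essential_range a b f = {Inf (f ` {a..b}) .. Sup (f ` {a..b})}"
    and d_inf: "filterlim d at_top sequentially"
    and distr: "has_asymptotic_distribution d lam a b f"
    and range: "\<forall>n. \<forall>i\<in>{1..d n}. lam i n \<in> f ` {a..b}"
  shows "\<exists>x :: nat \<Rightarrow> nat \<Rightarrow> real.
           asymptotically_uniform_grid d x a b \<and>
           (\<forall>n. \<forall>i\<in>{1..d n}. x i n \<in> {a..b}) \<and>
           (\<forall>n. \<exists>\<tau>. \<tau> permutes {1..d n} \<and> (\<forall>i\<in>{1..d n}. lam (\<tau> i) n = f (x i n)))"
proof -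
  have "thm_full a b f d lam"
    by unfold_locales (fact ab bdd fin_max fin_min fin_disc ER d_inf distr range)+
  then show ?thesis by (rule thm_full.main_result)
qed

end
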